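(* Given an NC-spectrum graph $G=(V,E)$ with nodes $x_0,\dots,x_k,y_k,\dots,y_0$, the values $\mathrm{lce}(z)$ and $\mathrm{dia}(z)$ for all nodes $z$ (as defined in the context) can be computed in $O(|V|+|E|)$ time.
   Context: Fix a finite set $\mathcal{R}$ of positive reals (the amino acid masses). A real $m$ is an amino-acid mass sum if $m=r_1+\cdots+r_t$ for some $t\ge1$, $r_i\in\mathcal{R}$ (repetitions allowed). Given a peptide mass $W$ and $k$ ion masses $w_1,\dots,w_k$, the NC-spectrum graph $G=(V,E)$ has vertex set $V=\{N_0,\dots,N_k,C_0,\dots,C_k\}$ ($|V|=2k+2$) with coordinates $\mathrm{cord}(N_0)=0$, $\mathrm{cord}(C_0)=W-18$, $\mathrm{cord}(N_j)=w_j-1$, $\mathrm{cord}(C_j)=W-w_j$ ($1\le j\le k$); for $j\ge1$, $N_j,C_j$ are derived from the $j$-th ion. There is an edge from $u$ to $v$ ($E(u,v)=1$, else $0$) iff $u,v$ are not derived from the same ion, $\mathrm{cord}(u)<\mathrm{cord}(v)$, and $\mathrm{cord}(v)-\mathrm{cord}(u)$ is an amino-acid mass sum. The nodes are listed in increasing coordinate order as $x_0,\dots,x_k,y_k,\dots,y_0$, with $x_0=N_0$, $y_0=C_0$ and $\{x_j,y_j\}$ the pair derived from one ion ($j\ge1$); every edge goes from a node to a later node in this list. The graph is stored (e.g. with adjacency lists) so that edge queries take $O(1)$ time and the edges entering or leaving a node can be listed in time proportional to their number. The table $M$: for $0\le i,j\le k$, $M(i,j)=1$ if there exist a directed path $L$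 from $x_0$ to $x_i$ and a directed path $R$ from $y_j$ to $y_0$ (a path may be a single node) such that $L\cup R$ contains exactly one of $x_p$ and $y_p$ for every $1\le p\le\max(i,j)$, and $M(i,j)=0$ otherwise. For $0\le i\le k$: $\mathrm{lce}(x_i)=j-i$ where $j\ge i$ is the largest index with $E(x_i,x_{i+1})=\dots=E(x_{j-1},x_j)=1$; $\mathrm{lce}(y_i)=i-j$ where $j\le i$ is the smallest index with $E(y_i,y_{i-1})=\dots=E(y_{j+1},y_j)=1$. Also $\mathrm{dia}(x_j)=M(j,j-1)$ and $\mathrm{dia}(y_j)=M(j-1,j)$ for $0<j\le k$, and $\mathrm{dia}(x_0)=\mathrm{dia}(y_0)=1$. *)

theory Defs
  imports Complex_Main
begin

text \<open>Node positions: 0..2k+1 in the order x_0,...,x_k,y_k,...,y_0, i.e.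
  x_i is position i and y_i is position 2k+1-i.\<close>

definition Xn :: "nat \<Rightarrow> nat \<Rightarrow> nat" where "Xn k i = i"
definition Yn :: "nat \<Rightarrow> nat \<Rightarrow> nat" where "Yn k i = 2*k + 1 - i"

definition amino_sum :: "real set \<Rightarrow> real \<Rightarrow> bool" where
  "amino_sum R m \<longleftrightarrow> (\<exists>rs. rs \<noteq> [] \<and> set rs \<subseteq> R \<and> m = sum_list rs)"

text \<open>Ions are numbered 1..k so that the j-th ion yields the pair x_j, y_j.
  sw j says whether x_j is C_j (True) or N_j (False).
  cord(N_0)=0, cord(C_0)=W-18, cord(N_j)=w_j-1, cord(C_j)=W-w_j.\<close>
definition pos_cord :: "real \<Rightarrow> (nat \<Rightarrow> real) \<Rightarrow> (nat \<Rightarrow> bool) \<Rightarrow> nat \<Rightarrow> nat \<Rightarrow> real" where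
  "pos_cord W w sw k p =
     (if p = 0 then 0
      else if p \<le> k then (if sw p then W - w p else w p - 1)
      else if p < 2*k + 1 then
        (let j = 2*k + 1 - p in if sw j then w j - 1 else W - w j)
      else W - 18)"

text \<open>Ion from which the node at position p is derived (0 = N_0 / C_0, not derived from an ion).\<close>
definition ion_of :: "nat \<Rightarrow> nat \<Rightarrow> nat" where
  "ion_of k p = (if 1 \<le> p \<and> p \<le> k then p else if k < p \<and> p \<le> 2*k then 2*k + 1 - p else 0)"

definition nc_edge :: "real set \<Rightarrow> real \<Rightarrow> (nat \<Rightarrow> real) \<Rightarrow> (nat \<Rightarrow> bool) \<Rightarrow> nat \<Rightarrow> nat \<Rightarrow> nat \<Rightarrow> bool" where
  "nc_edge R W w sw k u v \<longleftrightarrow>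
     u \<le> 2*k + 1 \<and> v \<le> 2*k + 1 \<and>
     \<not> (ion_of k u \<noteq> 0 \<and> ion_of k u = ion_of k v) \<and>
     pos_cord W w sw k u < pos_cord W w sw k v \<and>
     amino_sum R (pos_cord W w sw k v - pos_cord W w sw k u)"

definition sorted_listing :: "real \<Rightarrow> (nat \<Rightarrow> real) \<Rightarrow> (nat \<Rightarrow> bool) \<Rightarrow> nat \<Rightarrow> bool" where
  "sorted_listing W w sw k \<longleftrightarrow>
     (\<forall>p q. p \<le> q \<and> q \<le> 2*k + 1 \<longrightarrow> pos_cord W w sw k p \<le> pos_cord W w sw k q)"

definition is_path :: "(nat \<Rightarrow> nat \<Rightarrow> bool) \<Rightarrow> nat list \<Rightarrow> bool" where
  "is_path E xs \<longleftrightarrow> xs \<noteq> [] \<and> (\<forall>n. Suc n < length xs \<longrightarrow> E (xs ! n) (xs ! Suc n))"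

definition Mtab :: "(nat \<Rightarrow> nat \<Rightarrow> bool) \<Rightarrow> nat \<Rightarrow> nat \<Rightarrow> nat \<Rightarrow> bool" where
  "Mtab E k i j \<longleftrightarrow>
     (\<exists>L R. is_path E L \<and> hd L = Xn k 0 \<and> last L = Xn k i \<and>
            is_path E R \<and> hd R = Yn k j \<and> last R = Yn k 0 \<and>
            (\<forall>p. 1 \<le> p \<and> p \<le> max i j \<longrightarrow>
                 ((Xn k p \<in> set L \<union> set R) \<noteq> (Yn k p \<in> set L \<union> set R))))"

definition lce_x :: "(nat \<Rightarrow> nat \<Rightarrow> bool) \<Rightarrow> nat \<Rightarrow> nat \<Rightarrow> nat" where
  "lce_x E k i = (GREATEST d. i + d \<le> k \<and> (\<forall>t<d. E (Xn k (i + t)) (Xn k (i + t + 1))))"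

definition lce_y :: "(nat \<Rightarrow> nat \<Rightarrow> bool) \<Rightarrow> nat \<Rightarrow> nat \<Rightarrow> nat" where
  "lce_y E k i = (GREATEST d. d \<le> i \<and> (\<forall>t<d. E (Yn k (i - t)) (Yn k (i - t - 1))))"

definition lce_pos :: "(nat \<Rightarrow> nat \<Rightarrow> bool) \<Rightarrow> nat \<Rightarrow> nat \<Rightarrow> nat" where
  "lce_pos E k p = (if p \<le> k then lce_x E k p else lce_y E k (2*k + 1 - p))"

definition dia_pos :: "(nat \<Rightarrow> nat \<Rightarrow> bool) \<Rightarrow> nat \<Rightarrow> nat \<Rightarrow> bool" where
  "dia_pos E k p =
     (if p \<le> k then (p = 0 \<or> Mtab E k p (p - 1))
      else (let j = 2*k + 1 - p in j = 0 \<or> Mtab E k (j - 1) j))"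

text \<open>Each instruction costs one time unit.
  Graph primitives: O(1) edge query; out/in-degree and i-th out/in-neighbour of a node
  (so that adjacency lists can be scanned in time proportional to their length).
  Invalid graph queries return 0.\<close>
datatype instr =
    LoadConst int int
  | AddI int int int
  | SubI int int int
  | LoadInd int int
  | StoreInd int int
  | Jz int nat
  | Jmp nat
  | EdgeQ int int int
  | OutDeg int int
  | OutNth int int int
  | InDeg int int
  | InNth int int int
  | Halt

type_synonym config = "nat \<times> (int \<Rightarrow> int)"

definition valid_node :: "nat \<Rightarrow> int \<Rightarrow> bool" where
  "valid_node k x \<longleftrightarrow> 0 \<le> x \<and> x \<le> 2 * int k + 1"

definition nth_or0 :: "nat list \<Rightarrow> int \<Rightarrow> int" where
  "nth_or0 xs i = (if 0 \<le> i \<and> i < int (length xs) then int (xs ! nat i) else 0)"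

definition halted :: "instr list \<Rightarrow> config \<Rightarrow> bool" where
  "halted P cf \<longleftrightarrow> fst cf \<ge> length P \<or> P ! fst cf = Halt"

fun exec_instr :: "nat \<Rightarrow> (nat \<Rightarrow> nat \<Rightarrow> bool) \<Rightarrow> (nat \<Rightarrow> nat list) \<Rightarrow> (nat \<Rightarrow> nat list)
                   \<Rightarrow> instr \<Rightarrow> config \<Rightarrow> config" where
  "exec_instr k E outl inl (LoadConst a c) (pc, m) = (Suc pc, m(a := c))"
| "exec_instr k E outl inl (AddI a b c) (pc, m) = (Suc pc, m(a := m b + m c))"
| "exec_instr k E outl inl (SubI a b c) (pc, m) = (Suc pc, m(a := m b - m c))"
| "exec_instr k E outl inl (LoadInd a b) (pc, m) = (Suc pc, m(a := m (m b)))"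
| "exec_instr k E outl inl (StoreInd a b) (pc, m) = (Suc pc, m(m a := m b))"
| "exec_instr k E outl inl (Jz a n) (pc, m) = (if m a = 0 then n else Suc pc, m)"
| "exec_instr k E outl inl (Jmp n) (pc, m) = (n, m)"
| "exec_instr k E outl inl (EdgeQ a b c) (pc, m) =
     (Suc pc, m(a := (if valid_node k (m b) \<and> valid_node k (m c) \<and> E (nat (m b)) (nat (m c))
                      then 1 else 0)))"
| "exec_instr k E outl inl (OutDeg a b) (pc, m) =
     (Suc pc, m(a := (if valid_node k (m b) then int (length (outl (nat (m b)))) else 0)))"
| "exec_instr k E outl inl (OutNth a b c) (pc, m) =
     (Suc pc, m(a := (if valid_node k (m b) then nth_or0 (outl (nat (m b))) (m c) else 0)))"
| "exec_instr k E outl inl (InDeg a b) (pc, m) =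
     (Suc pc, m(a := (if valid_node k (m b) then int (length (inl (nat (m b)))) else 0)))"
| "exec_instr k E outl inl (InNth a b c) (pc, m) =
     (Suc pc, m(a := (if valid_node k (m b) then nth_or0 (inl (nat (m b))) (m c) else 0)))"
| "exec_instr k E outl inl Halt cf = cf"

definition step :: "instr list \<Rightarrow> nat \<Rightarrow> (nat \<Rightarrow> nat \<Rightarrow> bool) \<Rightarrow> (nat \<Rightarrow> nat list)
                   \<Rightarrow> (nat \<Rightarrow> nat list) \<Rightarrow> config \<Rightarrow> config" where
  "step P k E outl inl cf = (if halted P cf then cf else exec_instr k E outl inl (P ! fst cf) cf)"

definition run :: "instr list \<Rightarrow> nat \<Rightarrow> (nat \<Rightarrow> nat \<Rightarrow> bool) \<Rightarrow> (nat \<Rightarrow> nat list)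
                   \<Rightarrow> (nat \<Rightarrow> nat list) \<Rightarrow> nat \<Rightarrow> config" where
  "run P k E outl inl t = (step P k E outl inl ^^ t) (0, (\<lambda>_. 0)(0 := int k))"

definition adj_lists :: "nat \<Rightarrow> (nat \<Rightarrow> nat \<Rightarrow> bool) \<Rightarrow> (nat \<Rightarrow> nat list) \<Rightarrow> (nat \<Rightarrow> nat list) \<Rightarrow> bool" where
  "adj_lists k E outl inl \<longleftrightarrow>
     (\<forall>u \<le> 2*k + 1. distinct (outl u) \<and> set (outl u) = {v. E u v} \<and>
                     distinct (inl u) \<and> set (inl u) = {v. E v u})"

definition num_edges :: "nat \<Rightarrow> (nat \<Rightarrow> nat \<Rightarrow> bool) \<Rightarrow> nat" where
  "num_edges k E = card {(u, v). u \<le> 2*k + 1 \<and> v \<le> 2*k + 1 \<and> E u v}"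

end

theory Submission
  imports Defs
begin


definition goodE :: "nat \<Rightarrow> (nat \<Rightarrow> nat \<Rightarrow> bool) \<Rightarrow> bool" where
  "goodE k E \<longleftrightarrow> (\<forall>u v. E u v \<longrightarrow> u < v \<and> v \<le> 2*k+1) \<and>
                    (\<forall>u. 1 \<le> u \<and> u \<le> k \<longrightarrow> \<not> E u (2*k+1-u))"

lemma is_path_snoc:
  "is_path E (xs @ [b]) \<longleftrightarrow> (xs = [] \<or> (is_path E xs \<and> E (last xs) b))"
proof (cases "xs = []")
  case True thus ?thesis by (simp add: is_path_def)
next
  case False
  show ?thesis
  proof
    assume H: "is_path E (xs @ [b])"
    have "is_path E xs" unfolding is_path_def
    proof (intro conjI allI impI)
      show "xs \<noteq> []" by fact
      fix n assume n: "Suc n < length xs"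
      have "E ((xs@[b])!n) ((xs@[b])!Suc n)" using H n unfolding is_path_def by simp
      thus "E (xs ! n) (xs ! Suc n)" using n by (simp add: nth_append)
    qed
    moreover have "E (last xs) b"
    proof -
      have "Suc (length xs - 1) < length (xs @ [b])" using False by simp
      with H have "E ((xs@[b]) ! (length xs - 1)) ((xs@[b]) ! Suc (length xs - 1))"
        unfolding is_path_def by blast
      moreover have "(xs@[b]) ! (length xs - 1) = last xs" using False
        by (simp add: nth_append last_conv_nth)
      moreover have "(xs@[b]) ! Suc (length xs - 1) = b" using False by simp
      ultimately show ?thesis by simp
    qed
    ultimately show "xs = [] \<or> (is_path E xs \<and> E (last xs) b)" by blast
  next
    assume "xs = [] \<or> (is_path E xs \<and> E (last xs) b)"
    with False have P: "is_path E xs" and L: "E (last xs) b" by auto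
    show "is_path E (xs @ [b])" unfolding is_path_def
    proof (intro conjI allI impI)
      show "xs @ [b] \<noteq> []" by simp
      fix n assume n: "Suc n < length (xs @ [b])"
      show "E ((xs @ [b]) ! n) ((xs @ [b]) ! Suc n)"
      proof (cases "Suc n < length xs")
        case True thus ?thesis using P by (simp add: is_path_def nth_append)
      next
        case False
        hence n1: "n = length xs - 1" and n2: "n < length xs" using n by simp_all
        have "last xs = xs ! n" using n1 \<open>xs \<noteq> []\<close> by (simp add: last_conv_nth)
        moreover have "(xs @ [b]) ! n = xs ! n" using n2 by (simp add: nth_append)
        moreover have "(xs @ [b]) ! Suc n = b"
        proof -
          have "Suc n = length xs" using n1 n2 by linarith
          thus ?thesis by (simp only: nth_append_length)
        qed
        ultimately show ?thesis using L by simp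
      qed
    qed
  qed
qed

lemma is_path_single[simp]: "is_path E [a]"
  by (simp add: is_path_def)

lemma is_path_bounds:
  assumes inc: "\<And>u v. E u v \<Longrightarrow> u < (v::nat)"
  shows "is_path E L \<Longrightarrow> x \<in> set L \<Longrightarrow> hd L \<le> x \<and> x \<le> last L"
proof (induction L arbitrary: x rule: rev_induct)
  case Nil thus ?case by simp
next
  case (snoc b xs)
  show ?case
  proof (cases "xs = []")
    case True thus ?thesis using snoc by simp
  next
    case False
    with snoc.prems(1) have P: "is_path E xs" and L: "E (last xs) b"
      by (auto simp: is_path_snoc)
    have lt: "last xs < b" using inc[OF L] .
    have hx: "hd xs \<le> last xs" using snoc.IH[OF P] False by simp
    from snoc.prems(2) have "x \<in> set xs \<or> x = b" by auto
    thus ?thesis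
    proof
      assume "x \<in> set xs"
      hence "hd xs \<le> x \<and> x \<le> last xs" using snoc.IH[OF P] by blast
      thus ?thesis using lt False by simp
    next
      assume "x = b" thus ?thesis using hx lt False by simp
    qed
  qed
qed


lemma goodE_inc: "goodE k E \<Longrightarrow> E u v \<Longrightarrow> u < v"
  by (simp add: goodE_def)
lemma goodE_le: "goodE k E \<Longrightarrow> E u v \<Longrightarrow> v \<le> 2*k+1"
  by (simp add: goodE_def)
lemma goodE_noxy: "goodE k E \<Longrightarrow> 1 \<le> u \<Longrightarrow> u \<le> k \<Longrightarrow> \<not> E u (2*k+1-u)"
  by (simp add: goodE_def)

lemma path_bounds:
  assumes "goodE k E" "is_path E L" "x \<in> set L"
  shows "hd L \<le> x \<and> x \<le> last L"
  using is_path_bounds[of E L x] goodE_inc[OF assms(1)] assms(2,3) by blast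

lemma Mtab_unfold:
  "Mtab E k i j \<longleftrightarrow>
     (\<exists>L R. is_path E L \<and> hd L = 0 \<and> last L = i \<and>
            is_path E R \<and> hd R = 2*k+1-j \<and> last R = 2*k+1 \<and>
            (\<forall>p. 1 \<le> p \<and> p \<le> max i j \<longrightarrow>
                 ((p \<in> set L \<union> set R) \<noteq> (2*k+1-p \<in> set L \<union> set R))))"
  unfolding Mtab_def Xn_def Yn_def by simp

lemma snoc_decomp:
  assumes "is_path E L" "hd L = a" "last L = b" "a \<noteq> b"
  obtains L0 where "L = L0 @ [b]" "L0 \<noteq> []" "is_path E L0" "E (last L0) b" "hd L0 = a"
proof -
  have ne: "L \<noteq> []" using assms(1) by (simp add: is_path_def)
  define L0 where "L0 = butlast L"
  have LL: "L = L0 @ [b]" using ne assms(3) unfolding L0_def by (metis append_butlast_last_id)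
  have "L0 \<noteq> []" using LL assms(2,4) by auto
  moreover have "is_path E L0" "E (last L0) b" using assms(1) LL calculation
    by (auto simp: is_path_snoc)
  moreover have "hd L0 = a" using LL assms(2) calculation by simp
  ultimately show ?thesis using that LL by blast
qed

lemma Mtab_step:
  assumes g: "goodE k E" and ij: "j+1 < i" "i \<le> k"
  shows "Mtab E k i j \<longleftrightarrow> Mtab E k (i-1) j \<and> E (i-1) i"
proof
  assume "Mtab E k i j"
  then obtain L R where L: "is_path E L" "hd L = 0" "last L = i"
    and R: "is_path E R" "hd R = 2*k+1-j" "last R = 2*k+1"
    and C: "\<forall>p. 1 \<le> p \<and> p \<le> max i j \<longrightarrow> ((p \<in> set L \<union> set R) \<noteq> (2*k+1-p \<in> set L \<union> set R))"
    unfolding Mtab_unfold by blast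
  have Lb: "\<And>x. x \<in> set L \<Longrightarrow> x \<le> i" using path_bounds[OF g L(1)] L by auto
  have Rb: "\<And>x. x \<in> set R \<Longrightarrow> 2*k+1-j \<le> x" using path_bounds[OF g R(1)] R by auto
  obtain L0 where L0: "L = L0 @ [i]" "L0 \<noteq> []" "is_path E L0" "E (last L0) i" "hd L0 = 0"
    using snoc_decomp[OF L] ij by auto
  have L0b: "\<And>x. x \<in> set L0 \<Longrightarrow> x \<le> last L0" using path_bounds[OF g L0(3)] by auto
  have lt: "last L0 < i" using goodE_inc[OF g L0(4)] .
  have "(i - 1 \<in> set L \<union> set R) \<noteq> (2*k+1-(i-1) \<in> set L \<union> set R)" using C ij by auto
  moreover have "2*k+1-(i-1) \<notin> set L" using Lb ij by force
  moreover have "2*k+1-(i-1) \<notin> set R" using Rb ij by force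
  moreover have "i - 1 \<notin> set R" using Rb ij by force
  ultimately have "i - 1 \<in> set L" by blast
  hence "i - 1 \<in> set L0" using L0(1) ij by auto
  hence last: "last L0 = i - 1" using L0b lt by force
  have "Mtab E k (i-1) j" unfolding Mtab_unfold
  proof (intro exI conjI)
    show "is_path E L0" "hd L0 = 0" "last L0 = i - 1" by fact+
    show "is_path E R" "hd R = 2*k+1-j" "last R = 2*k+1" by fact+
    show "\<forall>p. 1 \<le> p \<and> p \<le> max (i-1) j \<longrightarrow> ((p \<in> set L0 \<union> set R) \<noteq> (2*k+1-p \<in> set L0 \<union> set R))"
    proof (intro allI impI)
      fix p assume p: "1 \<le> p \<and> p \<le> max (i-1) j"
      have "(p \<in> set L \<union> set R) \<noteq> (2*k+1-p \<in> set L \<union> set R)" using C p by auto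
      moreover have "p \<noteq> i" "2*k+1-p \<noteq> i" using p ij by auto
      ultimately show "(p \<in> set L0 \<union> set R) \<noteq> (2*k+1-p \<in> set L0 \<union> set R)" using L0(1) by auto
    qed
  qed
  thus "Mtab E k (i-1) j \<and> E (i-1) i" using L0(4) last by simp
next
  assume "Mtab E k (i-1) j \<and> E (i-1) i"
  then obtain L0 R where L: "is_path E L0" "hd L0 = 0" "last L0 = i-1"
    and R: "is_path E R" "hd R = 2*k+1-j" "last R = 2*k+1"
    and C: "\<forall>p. 1 \<le> p \<and> p \<le> max (i-1) j \<longrightarrow> ((p \<in> set L0 \<union> set R) \<noteq> (2*k+1-p \<in> set L0 \<union> set R))"
    and e: "E (i-1) i"
    unfolding Mtab_unfold by blast
  have Lb: "\<And>x. x \<in> set L0 \<Longrightarrow> x \<le> i-1" using path_bounds[OF g L(1)] L by auto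
  have Rb: "\<And>x. x \<in> set R \<Longrightarrow> 2*k+1-j \<le> x" using path_bounds[OF g R(1)] R by auto
  have ne: "L0 \<noteq> []" using L(1) by (simp add: is_path_def)
  show "Mtab E k i j" unfolding Mtab_unfold
  proof (intro exI conjI)
    show "is_path E (L0 @ [i])" using L e ne by (simp add: is_path_snoc)
    show "hd (L0 @ [i]) = 0" "last (L0 @ [i]) = i" using L ne by auto
    show "is_path E R" "hd R = 2*k+1-j" "last R = 2*k+1" by fact+
    show "\<forall>p. 1 \<le> p \<and> p \<le> max i j \<longrightarrow> ((p \<in> set (L0 @ [i]) \<union> set R) \<noteq> (2*k+1-p \<in> set (L0 @ [i]) \<union> set R))"
    proof (intro allI impI)
      fix p assume p: "1 \<le> p \<and> p \<le> max i j"
      show "(p \<in> set (L0 @ [i]) \<union> set R) \<noteq> (2*k+1-p \<in> set (L0 @ [i]) \<union> set R)"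
      proof (cases "p = i")
        case True
        have "2*k+1-i \<notin> set L0" using Lb ij by force
        moreover have "2*k+1-i \<notin> set R" using Rb ij by force
        moreover have "2*k+1-i \<noteq> i" using ij by auto
        ultimately show ?thesis using True by auto
      next
        case False
        hence "p \<le> max (i-1) j" using p by auto
        hence "(p \<in> set L0 \<union> set R) \<noteq> (2*k+1-p \<in> set L0 \<union> set R)" using C p by auto
        moreover have "2*k+1-p \<noteq> i" using p ij by auto
        ultimately show ?thesis using False by auto
      qed
    qed
  qed
qed


lemma Mtab_base:
  assumes g: "goodE k E" and ij: "1 \<le> j" "j+1 \<le> k"
  shows "Mtab E k (j+1) j \<longleftrightarrow> (\<exists>u<j. Mtab E k u j \<and> E u (j+1))"
proof
  assume "Mtab E k (j+1) j"
  then obtain L R where L: "is_path E L" "hd L = 0" "last L = j+1"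
    and R: "is_path E R" "hd R = 2*k+1-j" "last R = 2*k+1"
    and C: "\<forall>p. 1 \<le> p \<and> p \<le> max (j+1) j \<longrightarrow> ((p \<in> set L \<union> set R) \<noteq> (2*k+1-p \<in> set L \<union> set R))"
    unfolding Mtab_unfold by blast
  have Rb: "\<And>x. x \<in> set R \<Longrightarrow> 2*k+1-j \<le> x" using path_bounds[OF g R(1)] R by auto
  obtain L0 where L0: "L = L0 @ [j+1]" "L0 \<noteq> []" "is_path E L0" "E (last L0) (j+1)" "hd L0 = 0"
    using snoc_decomp[OF L] by auto
  have lt: "last L0 < j+1" using goodE_inc[OF g L0(4)] .
  have Rne: "R \<noteq> []" using R(1) by (simp add: is_path_def)
  have "2*k+1-j \<in> set R" using R(2) Rne hd_in_set by force
  hence "j \<notin> set L \<union> set R" using C ij by force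
  moreover have "last L0 \<in> set L" using L0 by simp
  ultimately have neq: "last L0 \<noteq> j" by auto
  have "Mtab E k (last L0) j" unfolding Mtab_unfold
  proof (intro exI conjI)
    show "is_path E L0" "hd L0 = 0" "last L0 = last L0" by (fact | simp)+
    show "is_path E R" "hd R = 2*k+1-j" "last R = 2*k+1" by fact+
    show "\<forall>p. 1 \<le> p \<and> p \<le> max (last L0) j \<longrightarrow> ((p \<in> set L0 \<union> set R) \<noteq> (2*k+1-p \<in> set L0 \<union> set R))"
    proof (intro allI impI)
      fix p assume p: "1 \<le> p \<and> p \<le> max (last L0) j"
      have "(p \<in> set L \<union> set R) \<noteq> (2*k+1-p \<in> set L \<union> set R)" using C p lt by auto
      moreover have "p \<noteq> j+1" "2*k+1-p \<noteq> j+1" using p ij lt by auto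
      ultimately show "(p \<in> set L0 \<union> set R) \<noteq> (2*k+1-p \<in> set L0 \<union> set R)" using L0(1) by auto
    qed
  qed
  thus "\<exists>u<j. Mtab E k u j \<and> E u (j+1)" using L0(4) lt neq by (intro exI[of _ "last L0"]) auto
next
  assume "\<exists>u<j. Mtab E k u j \<and> E u (j+1)"
  then obtain u L0 R where u: "u < j" and L: "is_path E L0" "hd L0 = 0" "last L0 = u"
    and R: "is_path E R" "hd R = 2*k+1-j" "last R = 2*k+1"
    and C: "\<forall>p. 1 \<le> p \<and> p \<le> max u j \<longrightarrow> ((p \<in> set L0 \<union> set R) \<noteq> (2*k+1-p \<in> set L0 \<union> set R))"
    and e: "E u (j+1)"
    unfolding Mtab_unfold by blast
  have Lb: "\<And>x. x \<in> set L0 \<Longrightarrow> x \<le> u" using path_bounds[OF g L(1)] L by auto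
  have Rb: "\<And>x. x \<in> set R \<Longrightarrow> 2*k+1-j \<le> x" using path_bounds[OF g R(1)] R by auto
  have ne: "L0 \<noteq> []" using L(1) by (simp add: is_path_def)
  show "Mtab E k (j+1) j" unfolding Mtab_unfold
  proof (intro exI conjI)
    show "is_path E (L0 @ [j+1])" using L e ne by (simp add: is_path_snoc)
    show "hd (L0 @ [j+1]) = 0" "last (L0 @ [j+1]) = j+1" using L ne by auto
    show "is_path E R" "hd R = 2*k+1-j" "last R = 2*k+1" by fact+
    show "\<forall>p. 1 \<le> p \<and> p \<le> max (j+1) j \<longrightarrow> ((p \<in> set (L0 @ [j+1]) \<union> set R) \<noteq> (2*k+1-p \<in> set (L0 @ [j+1]) \<union> set R))"
    proof (intro allI impI)
      fix p assume p: "1 \<le> p \<and> p \<le> max (j+1) j"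
      show "(p \<in> set (L0 @ [j+1]) \<union> set R) \<noteq> (2*k+1-p \<in> set (L0 @ [j+1]) \<union> set R)"
      proof (cases "p = j+1")
        case True
        have "2*k+1-(j+1) \<notin> set L0" using Lb ij u by force
        moreover have "2*k+1-(j+1) \<notin> set R" using Rb ij by force
        moreover have "2*k+1-(j+1) \<noteq> j+1" using ij by auto
        ultimately show ?thesis using True by auto
      next
        case False
        hence "p \<le> max u j" using p by auto
        hence "(p \<in> set L0 \<union> set R) \<noteq> (2*k+1-p \<in> set L0 \<union> set R)" using C p by auto
        moreover have "2*k+1-p \<noteq> j+1" using p ij by auto
        ultimately show ?thesis using False by auto
      qed
    qed
  qed
qed

lemma Mtab_base0:
  assumes g: "goodE k E" and k: "1 \<le> k"
  shows "Mtab E k 1 0 \<longleftrightarrow> E 0 1"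
proof
  assume "Mtab E k 1 0"
  then obtain L R where L: "is_path E L" "hd L = 0" "last L = 1"
    unfolding Mtab_unfold by blast
  obtain L0 where L0: "L = L0 @ [1]" "L0 \<noteq> []" "is_path E L0" "E (last L0) 1" "hd L0 = 0"
    using snoc_decomp[OF L] by auto
  have "last L0 < 1" using goodE_inc[OF g L0(4)] .
  thus "E 0 1" using L0(4) by simp
next
  assume e: "E 0 1"
  show "Mtab E k 1 0" unfolding Mtab_unfold
  proof (intro exI conjI)
    show "is_path E ([0] @ [1])" using is_path_snoc[of E "[0]" 1] e by simp
    show "hd ([0] @ [1]) = (0::nat)" "last ([0] @ [1]) = (1::nat)" by auto
    show "is_path E [2*k+1]" "hd [2*k+1] = 2*k+1-0" "last [2*k+1] = 2*k+1" by auto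
    show "\<forall>p. 1 \<le> p \<and> p \<le> max 1 0 \<longrightarrow> ((p \<in> set ([0] @ [1]) \<union> set [2*k+1]) \<noteq> (2*k+1-p \<in> set ([0] @ [1]) \<union> set [2*k+1]))"
      using k by auto
  qed
qed

definition chainX :: "(nat \<Rightarrow> nat \<Rightarrow> bool) \<Rightarrow> nat \<Rightarrow> nat \<Rightarrow> bool" where
  "chainX E a b \<longleftrightarrow> (\<forall>t. a \<le> t \<and> t < b \<longrightarrow> E t (t+1))"

lemma Mtab_D:
  assumes g: "goodE k E"
  shows "j + 1 + d \<le> k \<Longrightarrow> Mtab E k (j+1+d) j \<longleftrightarrow> chainX E (j+1) (j+1+d) \<and> Mtab E k (j+1) j"
proof (induction d)
  case 0 thus ?case by (auto simp: chainX_def)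
next
  case (Suc d)
  have "Mtab E k (j+1+Suc d) j \<longleftrightarrow> Mtab E k (j+1+d) j \<and> E (j+1+d) (j+1+Suc d)"
    using Mtab_step[OF g, of j "j+1+Suc d"] Suc.prems by simp
  also have "\<dots> \<longleftrightarrow> chainX E (j+1) (j+1+d) \<and> Mtab E k (j+1) j \<and> E (j+1+d) (j+1+Suc d)"
    using Suc by simp
  also have "\<dots> \<longleftrightarrow> chainX E (j+1) (j+1+Suc d) \<and> Mtab E k (j+1) j"
    unfolding chainX_def by (auto simp: less_Suc_eq)
  finally show ?case .
qed

lemma Mtab_D':
  assumes g: "goodE k E" and "j < i" "i \<le> k"
  shows "Mtab E k i j \<longleftrightarrow> chainX E (j+1) i \<and> Mtab E k (j+1) j"
  using Mtab_D[OF g, of j "i - j - 1"] assms by simp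

definition rf :: "nat \<Rightarrow> (nat \<Rightarrow> nat \<Rightarrow> bool) \<Rightarrow> nat \<Rightarrow> nat \<Rightarrow> bool" where
  "rf k E u v \<longleftrightarrow> u \<le> 2*k+1 \<and> v \<le> 2*k+1 \<and> E (2*k+1-v) (2*k+1-u)"

lemma goodE_rf:
  assumes g: "goodE k E" shows "goodE k (rf k E)"
proof -
  have A: "u < v \<and> v \<le> 2*k+1" if "rf k E u v" for u v
  proof -
    from that have uv: "u \<le> 2*k+1" "v \<le> 2*k+1" and e: "E (2*k+1-v) (2*k+1-u)" by (auto simp: rf_def)
    have "2*k+1-v < 2*k+1-u" using goodE_inc[OF g e] .
    thus ?thesis using uv by linarith
  qed
  have B: "\<not> rf k E u (2*k+1-u)" if u: "1 \<le> u \<and> u \<le> k" for u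
  proof -
    have "2*k+1-(2*k+1-u) = u" using u by simp
    thus ?thesis using goodE_noxy[OF g, of u] u by (simp add: rf_def)
  qed
  show ?thesis unfolding goodE_def using A B by blast
qed

lemma rf_rf:
  assumes g: "goodE k E" shows "rf k (rf k E) = E"
proof (intro ext)
  fix u v
  show "rf k (rf k E) u v = E u v"
  proof (cases "u \<le> 2*k+1 \<and> v \<le> 2*k+1")
    case True
    hence "2*k+1-(2*k+1-u) = u" "2*k+1-(2*k+1-v) = v" by simp_all
    thus ?thesis using True by (simp add: rf_def)
  next
    case False
    hence "\<not> E u v" using goodE_inc[OF g] goodE_le[OF g] by (meson le_trans less_imp_le_nat)
    thus ?thesis using False by (simp add: rf_def)
  qed
qed

lemma path_rf:
  assumes g: "goodE k E" and P: "is_path E R"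
  shows "is_path (rf k E) (rev (map (\<lambda>x. 2*k+1-x) R))"
  unfolding is_path_def
proof (intro conjI allI impI)
  show "rev (map (\<lambda>x. 2*k+1-x) R) \<noteq> []" using P by (simp add: is_path_def)
  fix n assume n: "Suc n < length (rev (map (\<lambda>x. 2*k+1-x) R))"
  define a where "a = R ! (length R - Suc n)"
  define b where "b = R ! (length R - Suc (Suc n))"
  have nn: "Suc (length R - Suc (Suc n)) = length R - Suc n" using n by simp
  have "Suc (length R - Suc (Suc n)) < length R" using n nn by simp
  hence "E (R ! (length R - Suc (Suc n))) (R ! Suc (length R - Suc (Suc n)))"
    using P unfolding is_path_def by blast
  hence e: "E b a" unfolding a_def b_def nn .
  have "rev (map (\<lambda>x. 2*k+1-x) R) ! n = 2*k+1-a" using n by (simp add: rev_nth a_def)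
  moreover have "rev (map (\<lambda>x. 2*k+1-x) R) ! Suc n = 2*k+1-b" using n by (simp add: rev_nth b_def)
  moreover have "a \<le> 2*k+1" "b < a" using goodE_le[OF g e] goodE_inc[OF g e] by auto
  ultimately show "rf k E (rev (map (\<lambda>x. 2*k+1-x) R) ! n) (rev (map (\<lambda>x. 2*k+1-x) R) ! Suc n)"
    unfolding rf_def using e by simp
qed

lemma Mtab_rf1:
  assumes g: "goodE k E" and ij: "i \<le> k" "j \<le> k" and M: "Mtab E k i j"
  shows "Mtab (rf k E) k j i"
proof -
  obtain L R where L: "is_path E L" "hd L = 0" "last L = i"
    and R: "is_path E R" "hd R = 2*k+1-j" "last R = 2*k+1"
    and C: "\<forall>p. 1 \<le> p \<and> p \<le> max i j \<longrightarrow> ((p \<in> set L \<union> set R) \<noteq> (2*k+1-p \<in> set L \<union> set R))"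
    using M unfolding Mtab_unfold by blast
  have Lb: "x \<le> 2*k+1" if "x \<in> set L" for x
  proof -
    have "x \<le> last L" using path_bounds[OF g L(1) that] by blast
    thus ?thesis using L ij by simp
  qed
  have Rb: "x \<le> 2*k+1" if "x \<in> set R" for x
  proof -
    have "x \<le> last R" using path_bounds[OF g R(1) that] by blast
    thus ?thesis using R by simp
  qed
  have Lne: "L \<noteq> []" using L(1) by (simp add: is_path_def)
  have Rne: "R \<noteq> []" using R(1) by (simp add: is_path_def)
  define s where "s = (\<lambda>x::nat. 2*k+1-x)"
  have S: "set (rev (map s R)) \<union> set (rev (map s L)) = s ` (set L \<union> set R)" by (simp add: image_Un Un_commute)
  show ?thesis unfolding Mtab_unfold
  proof (intro exI conjI)
    show "is_path (rf k E) (rev (map s R))" "is_path (rf k E) (rev (map s L))"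
      using path_rf[OF g] L R unfolding s_def by auto
    show "hd (rev (map s R)) = 0" using R Rne by (simp add: hd_rev last_map s_def)
    show "last (rev (map s R)) = j" using R Rne ij by (simp add: last_rev hd_map s_def)
    show "hd (rev (map s L)) = 2*k+1-i" using L Lne by (simp add: hd_rev last_map s_def)
    show "last (rev (map s L)) = 2*k+1" using L Lne by (simp add: last_rev hd_map s_def)
    show "\<forall>p. 1 \<le> p \<and> p \<le> max j i \<longrightarrow> ((p \<in> set (rev (map s R)) \<union> set (rev (map s L))) \<noteq> (2*k+1-p \<in> set (rev (map s R)) \<union> set (rev (map s L))))"
    proof (intro allI impI)
      fix p assume p: "1 \<le> p \<and> p \<le> max j i"
      have A: "\<And>q. q \<le> 2*k+1 \<Longrightarrow> (q \<in> s ` (set L \<union> set R)) = (2*k+1-q \<in> set L \<union> set R)"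
      proof -
        fix q assume q: "q \<le> 2*k+1"
        show "(q \<in> s ` (set L \<union> set R)) = (2*k+1-q \<in> set L \<union> set R)"
        proof
          assume "q \<in> s ` (set L \<union> set R)"
          then obtain x where "x \<in> set L \<union> set R" "q = s x" by auto
          moreover have "x \<le> 2*k+1" using calculation Lb Rb by auto
          ultimately show "2*k+1-q \<in> set L \<union> set R" unfolding s_def by (simp add: diff_diff_cancel)
        next
          assume "2*k+1-q \<in> set L \<union> set R"
          moreover have "s (2*k+1-q) = q" using q unfolding s_def by simp
          ultimately show "q \<in> s ` (set L \<union> set R)" by (metis image_eqI)
        qed
      qed
      have "(p \<in> set L \<union> set R) \<noteq> (2*k+1-p \<in> set L \<union> set R)" using C p by auto
      moreover have "p \<le> 2*k+1" using p ij by auto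
      ultimately show "(p \<in> set (rev (map s R)) \<union> set (rev (map s L))) \<noteq> (2*k+1-p \<in> set (rev (map s R)) \<union> set (rev (map s L)))"
        unfolding S using A[of p] A[of "2*k+1-p"] by (simp add: diff_diff_cancel)
    qed
  qed
qed

lemma Mtab_rf:
  assumes g: "goodE k E" and ij: "i \<le> k" "j \<le> k"
  shows "Mtab E k i j \<longleftrightarrow> Mtab (rf k E) k j i"
  using Mtab_rf1[OF g ij] Mtab_rf1[OF goodE_rf[OF g] ij(2,1)] rf_rf[OF g] by auto


definition chainY :: "(nat \<Rightarrow> nat \<Rightarrow> bool) \<Rightarrow> nat \<Rightarrow> nat \<Rightarrow> nat \<Rightarrow> bool" where
  "chainY E k a b \<longleftrightarrow> (\<forall>t. a \<le> t \<and> t < b \<longrightarrow> E (2*k+1-(t+1)) (2*k+1-t))"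

lemma chainX_rf: "b \<le> k \<Longrightarrow> chainX (rf k E) a b \<longleftrightarrow> chainY E k a b"
  unfolding chainX_def chainY_def rf_def by auto

lemma chainY_rf:
  assumes "b \<le> k" shows "chainY (rf k E) k a b \<longleftrightarrow> chainX E a b"
proof -
  have "\<And>t. t < b \<Longrightarrow> rf k E (2*k+1-(t+1)) (2*k+1-t) = E t (t+1)"
  proof -
    fix t assume "t < b"
    hence "2*k+1-(2*k+1-t) = t" "2*k+1-(2*k+1-(t+1)) = t+1" using assms by auto
    thus "rf k E (2*k+1-(t+1)) (2*k+1-t) = E t (t+1)" by (auto simp: rf_def)
  qed
  thus ?thesis unfolding chainX_def chainY_def by auto
qed

lemma A_rec:
  assumes g: "goodE k E" and j: "1 \<le> j" "j+1 \<le> k"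
  shows "Mtab E k (j+1) j \<longleftrightarrow> (\<exists>u<j. chainY E k (u+1) j \<and> Mtab E k u (u+1) \<and> E u (j+1))"
proof -
  have X: "Mtab E k u j \<longleftrightarrow> chainY E k (u+1) j \<and> Mtab E k u (u+1)" if u: "u < j" for u
  proof -
    have uk: "u \<le> k" "j \<le> k" "u+1 \<le> k" using u j by auto
    have "Mtab E k u j \<longleftrightarrow> Mtab (rf k E) k j u" using Mtab_rf[OF g uk(1,2)] .
    also have "\<dots> \<longleftrightarrow> chainX (rf k E) (u+1) j \<and> Mtab (rf k E) k (u+1) u"
      using Mtab_D'[OF goodE_rf[OF g] u uk(2)] .
    also have "\<dots> \<longleftrightarrow> chainY E k (u+1) j \<and> Mtab E k u (u+1)"
      using chainX_rf[OF uk(2), of E "u+1"] Mtab_rf[OF g uk(1) uk(3)] by blast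
    finally show ?thesis .
  qed
  show ?thesis
  proof
    assume "Mtab E k (j+1) j"
    then obtain u where "u < j" "Mtab E k u j" "E u (j+1)" using Mtab_base[OF g j] by blast
    thus "\<exists>u<j. chainY E k (u+1) j \<and> Mtab E k u (u+1) \<and> E u (j+1)" using X by blast
  next
    assume "\<exists>u<j. chainY E k (u+1) j \<and> Mtab E k u (u+1) \<and> E u (j+1)"
    then obtain u where "u < j" "chainY E k (u+1) j" "Mtab E k u (u+1)" "E u (j+1)" by blast
    thus "Mtab E k (j+1) j" using X[of u] Mtab_base[OF g j] by blast
  qed
qed

lemma B_rec:
  assumes g: "goodE k E" and j: "1 \<le> j" "j+1 \<le> k"
  shows "Mtab E k j (j+1) \<longleftrightarrow> (\<exists>u<j. chainX E (u+1) j \<and> Mtab E k (u+1) u \<and> E (2*k+1-(j+1)) (2*k+1-u))"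
proof -
  have jk: "j \<le> k" "j+1 \<le> k" using j by auto
  have "Mtab E k j (j+1) \<longleftrightarrow> Mtab (rf k E) k (j+1) j" using Mtab_rf[OF g jk] .
  also have "\<dots> \<longleftrightarrow> (\<exists>u<j. chainY (rf k E) k (u+1) j \<and> Mtab (rf k E) k u (u+1) \<and> rf k E u (j+1))"
    using A_rec[OF goodE_rf[OF g] j] .
  also have "\<dots> \<longleftrightarrow> (\<exists>u<j. chainX E (u+1) j \<and> Mtab E k (u+1) u \<and> E (2*k+1-(j+1)) (2*k+1-u))"
  proof -
    have "chainY (rf k E) k (u+1) j \<and> Mtab (rf k E) k u (u+1) \<and> rf k E u (j+1) \<longleftrightarrow>
          chainX E (u+1) j \<and> Mtab E k (u+1) u \<and> E (2*k+1-(j+1)) (2*k+1-u)" if u: "u < j" for u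
    proof -
      have uk: "u+1 \<le> k" "u \<le> k" using u j by auto
      have "rf k E u (j+1) \<longleftrightarrow> E (2*k+1-(j+1)) (2*k+1-u)" using uk jk by (simp add: rf_def)
      thus ?thesis using chainY_rf[OF jk(1), of E "u+1"] Mtab_rf[OF g uk] by blast
    qed
    thus ?thesis by blast
  qed
  finally show ?thesis .
qed

lemma A_1: "goodE k E \<Longrightarrow> 1 \<le> k \<Longrightarrow> Mtab E k 1 0 \<longleftrightarrow> E 0 1"
  by (rule Mtab_base0)

lemma B_1:
  assumes g: "goodE k E" and k: "1 \<le> k"
  shows "Mtab E k 0 1 \<longleftrightarrow> E (2*k) (2*k+1)"
proof -
  have "Mtab E k 0 1 \<longleftrightarrow> Mtab (rf k E) k 1 0" using Mtab_rf[OF g] k by simp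
  also have "\<dots> \<longleftrightarrow> rf k E 0 1" using Mtab_base0[OF goodE_rf[OF g] k] .
  also have "\<dots> \<longleftrightarrow> E (2*k) (2*k+1)" by (simp add: rf_def)
  finally show ?thesis .
qed

lemma lce_x_eq: "lce_x E k i = (GREATEST d. i + d \<le> k \<and> (\<forall>t<d. E (i+t) (i+t+1)))"
  unfolding lce_x_def Xn_def by simp

lemma lce_x_k: "lce_x E k k = 0"
  unfolding lce_x_eq by (rule Greatest_equality) simp_all

lemma lce_x_rec:
  assumes i: "i < k"
  shows "lce_x E k i = (if E i (i+1) then lce_x E k (i+1) + 1 else 0)"
proof -
  define Q where "Q = (\<lambda>i d. i + d \<le> k \<and> (\<forall>t<d. E (i+t) (i+t+1)))"
  have QS: "Q i (Suc d) \<longleftrightarrow> E i (i+1) \<and> Q (i+1) d" for d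
  proof
    assume H: "Q i (Suc d)"
    have "E (i+0) (i+0+1)" using H unfolding Q_def by blast
    moreover have "Q (i+1) d" unfolding Q_def
    proof (intro conjI allI impI)
      show "i + 1 + d \<le> k" using H unfolding Q_def by simp
      fix t assume "t < d"
      hence "E (i + Suc t) (i + Suc t + 1)" using H unfolding Q_def by blast
      thus "E (i + 1 + t) (i + 1 + t + 1)" by simp
    qed
    ultimately show "E i (i+1) \<and> Q (i+1) d" by simp
  next
    assume H: "E i (i+1) \<and> Q (i+1) d"
    show "Q i (Suc d)" unfolding Q_def
    proof (intro conjI allI impI)
      show "i + Suc d \<le> k" using H unfolding Q_def by simp
      fix t assume t: "t < Suc d"
      show "E (i+t) (i+t+1)"
      proof (cases t)
        case 0 thus ?thesis using H by simp
      next
        case (Suc t')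
        hence "t' < d" using t by simp
        hence "E (i+1+t') (i+1+t'+1)" using H unfolding Q_def by blast
        thus ?thesis using Suc by simp
      qed
    qed
  qed
  have lx: "lce_x E k j = Greatest (Q j)" for j unfolding lce_x_eq Q_def by simp
  show ?thesis
  proof (cases "E i (i+1)")
    case True
    let ?g = "Greatest (Q (i+1))"
    have Q0: "Q (i+1) 0" using i unfolding Q_def by simp
    have bnd: "\<And>y. Q (i+1) y \<Longrightarrow> y \<le> k" unfolding Q_def by simp
    have Qg: "Q (i+1) ?g" using GreatestI_nat[of "Q (i+1)" 0 k] Q0 bnd by blast
    have "Greatest (Q i) = ?g + 1"
    proof (rule Greatest_equality)
      show "Q i (?g + 1)" using QS Qg True by simp
      fix y assume y: "Q i y"
      show "y \<le> ?g + 1"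
      proof (cases y)
        case 0 thus ?thesis by simp
      next
        case (Suc y') hence "Q (i+1) y'" using y QS by simp
        thus ?thesis using Greatest_le_nat[of "Q (i+1)" y' k] bnd Suc by simp
      qed
    qed
    thus ?thesis using True lx by simp
  next
    case False
    have "Greatest (Q i) = 0"
    proof (rule Greatest_equality)
      show "Q i 0" using i unfolding Q_def by simp
      fix y assume "Q i y" thus "y \<le> 0" using QS False by (cases y) auto
    qed
    thus ?thesis using False lx by simp
  qed
qed

lemma lce_y_eq: "lce_y E k i = (GREATEST d. d \<le> i \<and> (\<forall>t<d. E (2*k+1-(i-t)) (2*k+1-(i-t-1))))"
  unfolding lce_y_def Yn_def by simp

lemma lce_y_0: "lce_y E k 0 = 0"
  unfolding lce_y_eq by (rule Greatest_equality) simp_all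

lemma lce_y_rec:
  "lce_y E k (Suc i) = (if E (2*k+1-(i+1)) (2*k+1-i) then lce_y E k i + 1 else 0)"
proof -
  define Q where "Q = (\<lambda>i d. d \<le> i \<and> (\<forall>t<d. E (2*k+1-(i-t)) (2*k+1-(i-t-1))))"
  have QS: "Q (Suc i) (Suc d) \<longleftrightarrow> E (2*k+1-(i+1)) (2*k+1-i) \<and> Q i d" for d
  proof
    assume H: "Q (Suc i) (Suc d)"
    have "E (2*k+1-(Suc i - 0)) (2*k+1-(Suc i-0-1))" using H unfolding Q_def by blast
    moreover have "Q i d" unfolding Q_def
    proof (intro conjI allI impI)
      show "d \<le> i" using H unfolding Q_def by simp
      fix t assume "t < d"
      hence "E (2*k+1-(Suc i - Suc t)) (2*k+1-(Suc i-Suc t-1))" using H unfolding Q_def by blast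
      thus "E (2*k+1-(i-t)) (2*k+1-(i-t-1))" by simp
    qed
    ultimately show "E (2*k+1-(i+1)) (2*k+1-i) \<and> Q i d" by simp
  next
    assume H: "E (2*k+1-(i+1)) (2*k+1-i) \<and> Q i d"
    show "Q (Suc i) (Suc d)" unfolding Q_def
    proof (intro conjI allI impI)
      show "Suc d \<le> Suc i" using H unfolding Q_def by simp
      fix t assume t: "t < Suc d"
      show "E (2*k+1-(Suc i-t)) (2*k+1-(Suc i-t-1))"
      proof (cases t)
        case 0 thus ?thesis using H by simp
      next
        case (Suc t')
        hence "t' < d" using t by simp
        hence "E (2*k+1-(i-t')) (2*k+1-(i-t'-1))" using H unfolding Q_def by blast
        thus ?thesis using Suc by simp
      qed
    qed
  qed
  have ly: "lce_y E k j = Greatest (Q j)" for j unfolding lce_y_eq Q_def by simp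
  show ?thesis
  proof (cases "E (2*k+1-(i+1)) (2*k+1-i)")
    case True
    let ?g = "Greatest (Q i)"
    have Q0: "Q i 0" unfolding Q_def by simp
    have bnd: "\<And>y. Q i y \<Longrightarrow> y \<le> i" unfolding Q_def by simp
    have Qg: "Q i ?g" using GreatestI_nat[of "Q i" 0 i] Q0 bnd by blast
    have "Greatest (Q (Suc i)) = ?g + 1"
    proof (rule Greatest_equality)
      show "Q (Suc i) (?g + 1)" using QS Qg True by simp
      fix y assume y: "Q (Suc i) y"
      show "y \<le> ?g + 1"
      proof (cases y)
        case 0 thus ?thesis by simp
      next
        case (Suc y') hence "Q i y'" using y QS by simp
        thus ?thesis using Greatest_le_nat[of "Q i" y' i] bnd Suc by simp
      qed
    qed
    thus ?thesis using True ly by simp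
  next
    case False
    have "Greatest (Q (Suc i)) = 0"
    proof (rule Greatest_equality)
      show "Q (Suc i) 0" unfolding Q_def by simp
      fix y assume "Q (Suc i) y" thus "y \<le> 0" using QS False by (cases y) auto
    qed
    thus ?thesis using False ly by simp
  qed
qed

lemma lce_y_le: "lce_y E k i \<le> i"
  by (induction i) (auto simp: lce_y_0 lce_y_rec)

lemma lce_x_le: "i \<le> k \<Longrightarrow> i + lce_x E k i \<le> k"
proof (induction "k - i" arbitrary: i)
  case 0 thus ?case by (simp add: lce_x_k)
next
  case (Suc d)
  hence "i < k" by simp
  thus ?case using Suc.hyps(1)[of "i+1"] Suc by (simp add: lce_x_rec[of i k E])
qed

lemma chainX_top:
  assumes "q \<le> j" "j \<le> k"
  shows "chainX E q j \<longleftrightarrow> q + lce_x E k q = j + lce_x E k j"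
proof -
  have "\<forall>q. q + d \<le> k \<longrightarrow> (chainX E q (q+d) \<longleftrightarrow> q + lce_x E k q = (q+d) + lce_x E k (q+d))" for d
  proof (induction d)
    case 0 thus ?case by (auto simp: chainX_def)
  next
    case (Suc d)
    show ?case
    proof (intro allI impI)
      fix q assume q: "q + Suc d \<le> k"
      have ch: "chainX E q (q + Suc d) \<longleftrightarrow> E q (q+1) \<and> chainX E (q+1) ((q+1)+d)"
      proof
        assume H: "chainX E q (q + Suc d)"
        show "E q (q+1) \<and> chainX E (q+1) ((q+1)+d)"
          using H unfolding chainX_def by auto
      next
        assume H: "E q (q+1) \<and> chainX E (q+1) ((q+1)+d)"
        show "chainX E q (q + Suc d)" unfolding chainX_def
        proof (intro allI impI)
          fix t assume t: "q \<le> t \<and> t < q + Suc d"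
          show "E t (t+1)"
          proof (cases "t = q")
            case True thus ?thesis using H by simp
          next
            case False thus ?thesis using H t unfolding chainX_def by auto
          qed
        qed
      qed
      have IH: "chainX E (q+1) ((q+1)+d) \<longleftrightarrow> (q+1) + lce_x E k (q+1) = (q+1+d) + lce_x E k (q+1+d)"
        using Suc.IH[rule_format, of "q+1"] q by simp
      have rec: "lce_x E k q = (if E q (q+1) then lce_x E k (q+1) + 1 else 0)" using lce_x_rec q by simp
      show "chainX E q (q + Suc d) \<longleftrightarrow> q + lce_x E k q = (q + Suc d) + lce_x E k (q + Suc d)"
        using ch IH rec by auto
    qed
  qed
  from this[rule_format, of q "j - q"] show ?thesis using assms by simp
qed

lemma chainY_bot:
  assumes "q \<le> j"
  shows "chainY E k q j \<longleftrightarrow> q - lce_y E k q = j - lce_y E k j"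
proof -
  have "chainY E k q (q+d) \<longleftrightarrow> q - lce_y E k q = (q+d) - lce_y E k (q+d)" for d
  proof (induction d)
    case 0 thus ?case by (auto simp: chainY_def)
  next
    case (Suc d)
    have ch: "chainY E k q (q + Suc d) \<longleftrightarrow> chainY E k q (q+d) \<and> E (2*k+1-(q+d+1)) (2*k+1-(q+d))"
      unfolding chainY_def by (auto simp: less_Suc_eq)
    have rec: "lce_y E k (Suc (q+d)) = (if E (2*k+1-(q+d+1)) (2*k+1-(q+d)) then lce_y E k (q+d) + 1 else 0)"
      by (rule lce_y_rec)
    have le1: "lce_y E k q \<le> q" "lce_y E k (q+d) \<le> q+d" by (rule lce_y_le)+
    show ?case
    proof (cases "E (2*k+1-(q+d+1)) (2*k+1-(q+d))")
      case True
      hence "q + Suc d - lce_y E k (q + Suc d) = q + d - lce_y E k (q+d)" using rec le1 by simp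
      thus ?thesis using ch Suc.IH True by simp
    next
      case False
      hence "lce_y E k (q + Suc d) = 0" using rec by simp
      moreover have "q - lce_y E k q < q + Suc d" by simp
      ultimately show ?thesis using ch False by simp
    qed
  qed
  from this[of "j - q"] show ?thesis using assms by simp
qed




definition prog :: "instr list" where
  "prog = [
    Jmp 2,
    Halt,
    LoadConst (-1) 1,
    LoadConst (-4) 0,
    AddI (-2) 0 0,
    AddI (-2) (-2) (-1),
    AddI (-3) (-2) (-2),
    AddI (-3) (-3) (-1),
    StoreInd (-2) (-4),
    AddI (-5) 0 (-4),
    Jz (-5) 25,
    SubI (-5) (-5) (-1),
    AddI (-6) (-5) (-1),
    EdgeQ (-10) (-5) (-6),
    AddI (-7) (-5) (-5),
    AddI (-7) (-7) (-1),
    Jz (-10) 23,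
    AddI (-8) (-7) (-1),
    AddI (-8) (-8) (-1),
    LoadInd (-9) (-8),
    AddI (-9) (-9) (-1),
    StoreInd (-7) (-9),
    Jmp 10,
    StoreInd (-7) (-4),
    Jmp 10,
    StoreInd (-3) (-4),
    LoadConst (-5) 0,
    SubI (-6) 0 (-5),
    Jz (-6) 44,
    AddI (-5) (-5) (-1),
    SubI (-6) (-2) (-5),
    AddI (-7) (-6) (-1),
    EdgeQ (-10) (-6) (-7),
    SubI (-8) (-3) (-5),
    SubI (-8) (-8) (-5),
    Jz (-10) 42,
    AddI (-9) (-8) (-1),
    AddI (-9) (-9) (-1),
    LoadInd (-7) (-9),
    AddI (-7) (-7) (-1),
    StoreInd (-8) (-7),
    Jmp 27,
    StoreInd (-8) (-4),
    Jmp 27,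
    LoadConst (-6) 2,
    StoreInd (-6) (-1),
    AddI (-6) (-3) (-1),
    StoreInd (-6) (-1),
    Jz 0 129,
    LoadConst (-6) 4,
    EdgeQ (-10) (-4) (-1),
    StoreInd (-6) (-10),
    SubI (-7) (-2) (-1),
    EdgeQ (-10) (-7) (-2),
    SubI (-6) (-3) (-1),
    StoreInd (-6) (-10),
    LoadConst (-5) 1,
    SubI (-6) 0 (-5),
    Jz (-6) 129,
    LoadConst (-11) 0,
    SubI (-6) (-3) (-5),
    SubI (-6) (-6) (-5),
    LoadInd (-7) (-6),
    SubI (-15) (-5) (-7),
    AddI (-14) (-5) (-1),
    InDeg (-12) (-14),
    LoadConst (-13) 0,
    SubI (-6) (-12) (-13),
    Jz (-6) 87,
    InNth (-16) (-14) (-13),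
    AddI (-13) (-13) (-1),
    SubI (-6) (-16) (-5),
    Jz (-6) 67,
    AddI (-7) (-16) (-16),
    SubI (-8) (-3) (-7),
    SubI (-8) (-8) (-1),
    LoadInd (-9) (-8),
    Jz (-9) 67,
    SubI (-8) (-8) (-1),
    LoadInd (-9) (-8),
    AddI (-7) (-16) (-1),
    SubI (-7) (-7) (-9),
    SubI (-7) (-7) (-15),
    Jz (-7) 85,
    Jmp 67,
    LoadConst (-11) 1,
    Jmp 67,
    AddI (-6) (-5) (-5),
    AddI (-6) (-6) (-1),
    AddI (-6) (-6) (-1),
    AddI (-6) (-6) (-1),
    AddI (-6) (-6) (-1),
    StoreInd (-6) (-11),
    LoadConst (-11) 0,
    AddI (-6) (-5) (-5),
    AddI (-6) (-6) (-1),
    LoadInd (-7) (-6),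
    AddI (-15) (-5) (-7),
    SubI (-14) (-2) (-5),
    SubI (-14) (-14) (-1),
    OutDeg (-12) (-14),
    LoadConst (-13) 0,
    SubI (-6) (-12) (-13),
    Jz (-6) 123,
    OutNth (-16) (-14) (-13),
    AddI (-13) (-13) (-1),
    SubI (-6) (-2) (-5),
    SubI (-6) (-16) (-6),
    Jz (-6) 102,
    SubI (-7) (-2) (-16),
    AddI (-7) (-7) (-1),
    AddI (-8) (-7) (-7),
    AddI (-8) (-8) (-1),
    AddI (-9) (-8) (-1),
    LoadInd (-9) (-9),
    Jz (-9) 102,
    LoadInd (-9) (-8),
    AddI (-9) (-9) (-7),
    SubI (-9) (-9) (-15),
    Jz (-9) 121,
    Jmp 102,
    LoadConst (-11) 1,
    Jmp 102,
    SubI (-6) (-3) (-5),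
    SubI (-6) (-6) (-5),
    SubI (-6) (-6) (-1),
    StoreInd (-6) (-11),
    AddI (-5) (-5) (-1),
    Jmp 57,
    Halt]"

lemma prog_length: "length prog = 130"
  by (simp add: prog_def)

lemma prog_nth:
  "prog ! 0 = Jmp 2"
  "prog ! 1 = Halt"
  "prog ! 2 = LoadConst (-1) 1"
  "prog ! 3 = LoadConst (-4) 0"
  "prog ! 4 = AddI (-2) 0 0"
  "prog ! 5 = AddI (-2) (-2) (-1)"
  "prog ! 6 = AddI (-3) (-2) (-2)"
  "prog ! 7 = AddI (-3) (-3) (-1)"
  "prog ! 8 = StoreInd (-2) (-4)"
  "prog ! 9 = AddI (-5) 0 (-4)"
  "prog ! 10 = Jz (-5) 25"
  "prog ! 11 = SubI (-5) (-5) (-1)"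
  "prog ! 12 = AddI (-6) (-5) (-1)"
  "prog ! 13 = EdgeQ (-10) (-5) (-6)"
  "prog ! 14 = AddI (-7) (-5) (-5)"
  "prog ! 15 = AddI (-7) (-7) (-1)"
  "prog ! 16 = Jz (-10) 23"
  "prog ! 17 = AddI (-8) (-7) (-1)"
  "prog ! 18 = AddI (-8) (-8) (-1)"
  "prog ! 19 = LoadInd (-9) (-8)"
  "prog ! 20 = AddI (-9) (-9) (-1)"
  "prog ! 21 = StoreInd (-7) (-9)"
  "prog ! 22 = Jmp 10"
  "prog ! 23 = StoreInd (-7) (-4)"
  "prog ! 24 = Jmp 10"
  "prog ! 25 = StoreInd (-3) (-4)"
  "prog ! 26 = LoadConst (-5) 0"
  "prog ! 27 = SubI (-6) 0 (-5)"
  "prog ! 28 = Jz (-6) 44"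
  "prog ! 29 = AddI (-5) (-5) (-1)"
  "prog ! 30 = SubI (-6) (-2) (-5)"
  "prog ! 31 = AddI (-7) (-6) (-1)"
  "prog ! 32 = EdgeQ (-10) (-6) (-7)"
  "prog ! 33 = SubI (-8) (-3) (-5)"
  "prog ! 34 = SubI (-8) (-8) (-5)"
  "prog ! 35 = Jz (-10) 42"
  "prog ! 36 = AddI (-9) (-8) (-1)"
  "prog ! 37 = AddI (-9) (-9) (-1)"
  "prog ! 38 = LoadInd (-7) (-9)"
  "prog ! 39 = AddI (-7) (-7) (-1)"
  "prog ! 40 = StoreInd (-8) (-7)"
  "prog ! 41 = Jmp 27"
  "prog ! 42 = StoreInd (-8) (-4)"
  "prog ! 43 = Jmp 27"
  "prog ! 44 = LoadConst (-6) 2"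
  "prog ! 45 = StoreInd (-6) (-1)"
  "prog ! 46 = AddI (-6) (-3) (-1)"
  "prog ! 47 = StoreInd (-6) (-1)"
  "prog ! 48 = Jz 0 129"
  "prog ! 49 = LoadConst (-6) 4"
  "prog ! 50 = EdgeQ (-10) (-4) (-1)"
  "prog ! 51 = StoreInd (-6) (-10)"
  "prog ! 52 = SubI (-7) (-2) (-1)"
  "prog ! 53 = EdgeQ (-10) (-7) (-2)"
  "prog ! 54 = SubI (-6) (-3) (-1)"
  "prog ! 55 = StoreInd (-6) (-10)"
  "prog ! 56 = LoadConst (-5) 1"
  "prog ! 57 = SubI (-6) 0 (-5)"
  "prog ! 58 = Jz (-6) 129"
  "prog ! 59 = LoadConst (-11) 0"
  "prog ! 60 = SubI (-6) (-3) (-5)"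
  "prog ! 61 = SubI (-6) (-6) (-5)"
  "prog ! 62 = LoadInd (-7) (-6)"
  "prog ! 63 = SubI (-15) (-5) (-7)"
  "prog ! 64 = AddI (-14) (-5) (-1)"
  "prog ! 65 = InDeg (-12) (-14)"
  "prog ! 66 = LoadConst (-13) 0"
  "prog ! 67 = SubI (-6) (-12) (-13)"
  "prog ! 68 = Jz (-6) 87"
  "prog ! 69 = InNth (-16) (-14) (-13)"
  "prog ! 70 = AddI (-13) (-13) (-1)"
  "prog ! 71 = SubI (-6) (-16) (-5)"
  "prog ! 72 = Jz (-6) 67"
  "prog ! 73 = AddI (-7) (-16) (-16)"
  "prog ! 74 = SubI (-8) (-3) (-7)"
  "prog ! 75 = SubI (-8) (-8) (-1)"
  "prog ! 76 = LoadInd (-9) (-8)"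
  "prog ! 77 = Jz (-9) 67"
  "prog ! 78 = SubI (-8) (-8) (-1)"
  "prog ! 79 = LoadInd (-9) (-8)"
  "prog ! 80 = AddI (-7) (-16) (-1)"
  "prog ! 81 = SubI (-7) (-7) (-9)"
  "prog ! 82 = SubI (-7) (-7) (-15)"
  "prog ! 83 = Jz (-7) 85"
  "prog ! 84 = Jmp 67"
  "prog ! 85 = LoadConst (-11) 1"
  "prog ! 86 = Jmp 67"
  "prog ! 87 = AddI (-6) (-5) (-5)"
  "prog ! 88 = AddI (-6) (-6) (-1)"
  "prog ! 89 = AddI (-6) (-6) (-1)"
  "prog ! 90 = AddI (-6) (-6) (-1)"
  "prog ! 91 = AddI (-6) (-6) (-1)"
  "prog ! 92 = StoreInd (-6) (-11)"
  "prog ! 93 = LoadConst (-11) 0"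
  "prog ! 94 = AddI (-6) (-5) (-5)"
  "prog ! 95 = AddI (-6) (-6) (-1)"
  "prog ! 96 = LoadInd (-7) (-6)"
  "prog ! 97 = AddI (-15) (-5) (-7)"
  "prog ! 98 = SubI (-14) (-2) (-5)"
  "prog ! 99 = SubI (-14) (-14) (-1)"
  "prog ! 100 = OutDeg (-12) (-14)"
  "prog ! 101 = LoadConst (-13) 0"
  "prog ! 102 = SubI (-6) (-12) (-13)"
  "prog ! 103 = Jz (-6) 123"
  "prog ! 104 = OutNth (-16) (-14) (-13)"
  "prog ! 105 = AddI (-13) (-13) (-1)"
  "prog ! 106 = SubI (-6) (-2) (-5)"
  "prog ! 107 = SubI (-6) (-16) (-6)"
  "prog ! 108 = Jz (-6) 102"
  "prog ! 109 = SubI (-7) (-2) (-16)"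
  "prog ! 110 = AddI (-7) (-7) (-1)"
  "prog ! 111 = AddI (-8) (-7) (-7)"
  "prog ! 112 = AddI (-8) (-8) (-1)"
  "prog ! 113 = AddI (-9) (-8) (-1)"
  "prog ! 114 = LoadInd (-9) (-9)"
  "prog ! 115 = Jz (-9) 102"
  "prog ! 116 = LoadInd (-9) (-8)"
  "prog ! 117 = AddI (-9) (-9) (-7)"
  "prog ! 118 = SubI (-9) (-9) (-15)"
  "prog ! 119 = Jz (-9) 121"
  "prog ! 120 = Jmp 102"
  "prog ! 121 = LoadConst (-11) 1"
  "prog ! 122 = Jmp 102"
  "prog ! 123 = SubI (-6) (-3) (-5)"
  "prog ! 124 = SubI (-6) (-6) (-5)"
  "prog ! 125 = SubI (-6) (-6) (-1)"
  "prog ! 126 = StoreInd (-6) (-11)"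
  "prog ! 127 = AddI (-5) (-5) (-1)"
  "prog ! 128 = Jmp 57"
  "prog ! 129 = Halt"
  by (simp_all add: prog_def)

definition regs :: "nat \<Rightarrow> (int \<Rightarrow> int) \<Rightarrow> bool" where
  "regs k m \<longleftrightarrow> m 0 = int k \<and> m (-1) = 1 \<and> m (-2) = 2*int k+1 \<and> m (-3) = 4*int k+3 \<and> m (-4) = 0"

locale RAM =
  fixes k :: nat and E :: "nat \<Rightarrow> nat \<Rightarrow> bool" and outl inl :: "nat \<Rightarrow> nat list"
begin

definition st :: "config \<Rightarrow> config" where "st = step prog k E outl inl"

definition reachB :: "config \<Rightarrow> config \<Rightarrow> nat \<Rightarrow> bool" where
  "reachB c c' T \<longleftrightarrow> (\<exists>n\<le>T. (st ^^ n) c = c')"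

lemma reachB_refl: "reachB c c T"
  unfolding reachB_def by (rule exI[of _ 0]) simp

lemma reachB_stepI: "0 < T \<Longrightarrow> reachB (st c) c' (T - 1) \<Longrightarrow> reachB c c' T"
  unfolding reachB_def
proof -
  assume T: "0 < T" and "\<exists>n\<le>T - 1. (st ^^ n) (st c) = c'"
  then obtain n where "n \<le> T - 1" "(st ^^ n) (st c) = c'" by blast
  moreover have "(st ^^ Suc n) c = (st ^^ n) (st c)" by (simp only: funpow_Suc_right comp_apply)
  ultimately have "Suc n \<le> T" "(st ^^ Suc n) c = c'" using T by auto
  thus "\<exists>n\<le>T. (st ^^ n) c = c'" by blast
qed

lemma reachB_trans: "reachB a b T1 \<Longrightarrow> reachB b c T2 \<Longrightarrow> reachB a c (T1 + T2)"
  unfolding reachB_def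
proof -
  assume "\<exists>n\<le>T1. (st ^^ n) a = b" "\<exists>n\<le>T2. (st ^^ n) b = c"
  then obtain n1 n2 where "n1 \<le> T1" "(st ^^ n1) a = b" "n2 \<le> T2" "(st ^^ n2) b = c" by blast
  hence "n2 + n1 \<le> T1 + T2" "(st ^^ (n2 + n1)) a = c" by (auto simp: funpow_add)
  thus "\<exists>n\<le>T1 + T2. (st ^^ n) a = c" by blast
qed

lemma reachB_mono: "reachB a b T \<Longrightarrow> T \<le> T' \<Longrightarrow> reachB a b T'"
  unfolding reachB_def using le_trans by blast

lemma st_eval: "st (pc, m) = (if pc < 130 \<and> prog ! pc \<noteq> Halt then exec_instr k E outl inl (prog ! pc) (pc, m) else (pc, m))"
  unfolding st_def step_def halted_def prog_length by auto

lemma exec_pc1: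
  "exec_instr k E outl inl (LoadConst a c) (pc, m) = (pc+1, m(a := c))"
  "exec_instr k E outl inl (AddI a b c) (pc, m) = (pc+1, m(a := m b + m c))"
  "exec_instr k E outl inl (SubI a b c) (pc, m) = (pc+1, m(a := m b - m c))"
  "exec_instr k E outl inl (LoadInd a b) (pc, m) = (pc+1, m(a := m (m b)))"
  "exec_instr k E outl inl (StoreInd a b) (pc, m) = (pc+1, m(m a := m b))"
  "exec_instr k E outl inl (Jz a n) (pc, m) = (if m a = 0 then n else pc+1, m)"
  "exec_instr k E outl inl (Jmp n) (pc, m) = (n, m)"
  "exec_instr k E outl inl (EdgeQ a b c) (pc, m) =
     (pc+1, m(a := (if valid_node k (m b) \<and> valid_node k (m c) \<and> E (nat (m b)) (nat (m c))
                      then 1 else 0)))"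
  "exec_instr k E outl inl (OutDeg a b) (pc, m) =
     (pc+1, m(a := (if valid_node k (m b) then int (length (outl (nat (m b)))) else 0)))"
  "exec_instr k E outl inl (OutNth a b c) (pc, m) =
     (pc+1, m(a := (if valid_node k (m b) then nth_or0 (outl (nat (m b))) (m c) else 0)))"
  "exec_instr k E outl inl (InDeg a b) (pc, m) =
     (pc+1, m(a := (if valid_node k (m b) then int (length (inl (nat (m b)))) else 0)))"
  "exec_instr k E outl inl (InNth a b c) (pc, m) =
     (pc+1, m(a := (if valid_node k (m b) then nth_or0 (inl (nat (m b))) (m c) else 0)))"
  by simp_all

lemma nat_simps: "nat (int i + 1) = Suc i" "nat (1 + int i) = Suc i" by simp_all

lemmas ex_simps = exec_pc1 nat_simps st_eval prog_nth valid_node_def nth_or0_def fun_upd_apply regs_def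

lemma phase0: "\<exists>m. reachB (0, (\<lambda>_. 0)(0 := int k)) (8, m) 7 \<and> regs k m"
  apply (rule exI, rule conjI)
   apply (rule reachB_stepI, simp, simp del: exec_instr.simps add: ex_simps)+
   apply (rule reachB_refl)
  apply (simp add: regs_def)
  done

definition LXinv :: "nat \<Rightarrow> (int \<Rightarrow> int) \<Rightarrow> bool" where
  "LXinv i m \<longleftrightarrow> (\<forall>q. i \<le> q \<and> q \<le> k \<longrightarrow> m (2*int q+1) = int (lce_x E k q))"

lemma phase1_init:
  assumes "regs k m"
  shows "\<exists>m'. reachB (8,m) (10,m') 2 \<and> regs k m' \<and> m' (-5) = int k \<and> LXinv k m'"
  using assms
  apply (simp add: regs_def)
  apply (rule exI, rule conjI)
   apply (rule reachB_stepI, simp, simp del: exec_instr.simps add: ex_simps)+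
   apply (rule reachB_refl)
  apply (auto simp add: LXinv_def lce_x_k)
  done

lemma phase1_loop:
  "regs k m \<Longrightarrow> m (-5) = int i \<Longrightarrow> i \<le> k \<Longrightarrow> LXinv i m \<Longrightarrow>
   \<exists>m'. reachB (10,m) (25,m') (13*i+1) \<and> regs k m' \<and> LXinv 0 m'"
proof (induction i arbitrary: m)
  case 0
  show ?case
    using 0
    apply (simp add: regs_def)
    apply (rule exI, rule conjI)
     apply (rule reachB_stepI, simp, simp del: exec_instr.simps add: ex_simps)+
     apply (rule reachB_refl)
    apply simp
    done
next
  case (Suc i)
  have ik: "i < k" using Suc by simp
  have I1: "m (3 + 2 * int i) = int (lce_x E k (i+1))"
  proof -
    have "m (2 * int (i+1) + 1) = int (lce_x E k (i+1))" using Suc.prems(4) ik unfolding LXinv_def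
      by (metis Suc_eq_plus1 Suc_leI order_refl)
    moreover have "2 * int (i+1) + 1 = 3 + 2 * int i" by simp
    ultimately show ?thesis by metis
  qed
  have "\<exists>m1. reachB (10,m) (10,m1) 13 \<and> regs k m1 \<and> m1 (-5) = int i \<and> LXinv i m1"
  proof (cases "E i (i+1)")
    case True
    show ?thesis
      using Suc.prems True ik
      apply (simp add: regs_def)
      apply (rule exI, rule conjI)
       apply (rule reachB_stepI, simp, simp del: exec_instr.simps add: ex_simps)+
       apply (rule reachB_refl)
      apply (simp add: LXinv_def I1 lce_x_rec[OF ik])
      done
  next
    case False
    have "\<exists>m1. reachB (10,m) (10,m1) 9 \<and> regs k m1 \<and> m1 (-5) = int i \<and> LXinv i m1"
      using Suc.prems False ik
      apply (simp add: regs_def)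
      apply (rule exI, rule conjI)
       apply (rule reachB_stepI, simp, simp del: exec_instr.simps add: ex_simps)+
       apply (rule reachB_refl)
      apply (simp add: LXinv_def I1 lce_x_rec[OF ik])
      done
    moreover have le: "(9::nat) \<le> 13" by simp
    ultimately show ?thesis using reachB_mono[OF _ le] by blast
  qed
  then obtain m1 where R1: "reachB (10,m) (10,m1) 13" and M1: "regs k m1" "m1 (-5) = int i" "LXinv i m1"
    by blast
  obtain m' where R2: "reachB (10,m1) (25,m') (13*i+1)" and M2: "regs k m'" "LXinv 0 m'"
    using Suc.IH[OF M1(1,2) _ M1(3)] ik by auto
  have "reachB (10,m) (25,m') (13*Suc i+1)" using reachB_trans[OF R1 R2] by simp
  thus ?case using M2 by blast
qed

definition LYinv :: "nat \<Rightarrow> (int \<Rightarrow> int) \<Rightarrow> bool" where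
  "LYinv j m \<longleftrightarrow> (\<forall>q. q \<le> j \<longrightarrow> m (4*int k+3-2*int q) = int (lce_y E k q))"

lemma LXinv_upd[simp]: "a < 0 \<Longrightarrow> LXinv i (m(a := v)) = LXinv i m"
  unfolding LXinv_def by auto

lemma LYinv_upd[simp]: "a < 0 \<Longrightarrow> j \<le> k \<Longrightarrow> LYinv j (m(a := v)) = LYinv j m"
  unfolding LYinv_def by auto

lemma phase2_init:
  assumes "regs k m" "LXinv 0 m"
  shows "\<exists>m'. reachB (25,m) (27,m') 2 \<and> regs k m' \<and> m' (-5) = 0 \<and> LYinv 0 m' \<and> LXinv 0 m'"
  using assms
  apply (simp add: regs_def)
  apply (rule exI, rule conjI)
   apply (rule reachB_stepI, simp, simp del: exec_instr.simps add: ex_simps)+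
   apply (rule reachB_refl)
  apply (simp add: LXinv_def LYinv_def lce_y_0)
  done

lemma phase2_loop:
  "regs k m \<Longrightarrow> m (-5) = int j \<Longrightarrow> j \<le> k \<Longrightarrow> LYinv j m \<Longrightarrow> LXinv 0 m \<Longrightarrow>
   \<exists>m'. reachB (27,m) (44,m') (15*(k-j)+2) \<and> regs k m' \<and> LYinv k m' \<and> LXinv 0 m'"
proof (induction "k - j" arbitrary: j m)
  case 0
  hence jk: "j = k" by simp
  show ?case
    using 0 jk
    apply (simp add: regs_def)
    apply (rule exI, rule conjI)
     apply (rule reachB_stepI, simp, simp del: exec_instr.simps add: ex_simps)+
     apply (rule reachB_refl)
    apply simp
    done
next
  case (Suc d)
  have jk: "j < k" using Suc by simp
  have I1: "m (4*int k+3-2*int j) = int (lce_y E k j)"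
    using Suc.prems(4) unfolding LYinv_def by simp
  have I1': "m (3 + (4 * int k - 2 * int j)) = int (lce_y E k j)" using I1 by (simp add: algebra_simps)
  have N: "nat (2 * int k - int j) = 2*k - j" "nat (2 * int k - int j + 1) = Suc (2*k) - j"
    using jk by auto
  have "\<exists>m1. reachB (27,m) (27,m1) 15 \<and> regs k m1 \<and> m1 (-5) = int (j+1) \<and> LYinv (j+1) m1 \<and> LXinv 0 m1"
  proof (cases "E (2*k-j) (2*k+1-j)")
    case True
    show ?thesis
      using Suc.prems True jk I1 N
      apply (simp add: regs_def)
      apply (rule exI, rule conjI)
       apply (rule reachB_stepI, simp, simp del: exec_instr.simps add: ex_simps)+
       apply (rule reachB_refl)
      apply (simp add: LXinv_def LYinv_def)
      apply (intro allI impI)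
      apply (subgoal_tac "q = Suc j")
       apply (simp add: lce_y_rec I1')
      apply linarith
      done
  next
    case False
    have "\<exists>m1. reachB (27,m) (27,m1) 11 \<and> regs k m1 \<and> m1 (-5) = int (j+1) \<and> LYinv (j+1) m1 \<and> LXinv 0 m1"
      using Suc.prems False jk I1 N
      apply (simp add: regs_def)
      apply (rule exI, rule conjI)
       apply (rule reachB_stepI, simp, simp del: exec_instr.simps add: ex_simps)+
       apply (rule reachB_refl)
      apply (simp add: LXinv_def LYinv_def)
      apply (intro allI impI)
      apply (subgoal_tac "q = Suc j")
       apply (simp add: lce_y_rec I1')
      apply linarith
      done
    moreover have le: "(11::nat) \<le> 15" by simp
    ultimately show ?thesis using reachB_mono[OF _ le] by blast
  qed
  then obtain m1 where R1: "reachB (27,m) (27,m1) 15" and M1: "regs k m1" "m1 (-5) = int (j+1)" "LYinv (j+1) m1" "LXinv 0 m1"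
    by blast
  have "d = k - (j+1)" using Suc by simp
  then obtain m' where R2: "reachB (27,m1) (44,m') (15*(k-(j+1))+2)" and M2: "regs k m'" "LYinv k m'" "LXinv 0 m'"
    using Suc.hyps(1)[OF _ M1(1,2) _ M1(3,4)] jk by auto
  have kj: "k - j = Suc (k - (j+1))" using jk by simp
  have "reachB (27,m) (44,m') (15 + (15*(k-(j+1))+2))" using reachB_trans[OF R1 R2] .
  hence "reachB (27,m) (44,m') (15*(k-j)+2)" unfolding kj by simp
  thus ?case using M2 by blast
qed

definition dx :: "nat \<Rightarrow> bool" where "dx q \<longleftrightarrow> q = 0 \<or> Mtab E k q (q-1)"
definition dy :: "nat \<Rightarrow> bool" where "dy q \<longleftrightarrow> q = 0 \<or> Mtab E k (q-1) q"

definition DIAinv :: "nat \<Rightarrow> (int \<Rightarrow> int) \<Rightarrow> bool" where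
  "DIAinv j m \<longleftrightarrow> (\<forall>q. q \<le> j \<longrightarrow> m (2*int q+2) = (if dx q then 1 else 0) \<and>
                                  m (4*int k+4-2*int q) = (if dy q then 1 else 0))"

lemma dxy0[simp]: "dx 0" "dy 0" by (simp_all add: dx_def dy_def)

lemma LXinv_upd_even[simp]:
  assumes "even a" shows "LXinv i (m(a := v)) = LXinv i m"
proof -
  have "2*int q+1 \<noteq> a" for q
  proof
    assume "2*int q+1 = a"
    moreover have "odd (2*int q+1)" by simp
    ultimately show False using assms by simp
  qed
  thus ?thesis unfolding LXinv_def by simp
qed

lemma LYinv_upd_even[simp]:
  assumes "even a" shows "LYinv j (m(a := v)) = LYinv j m"
proof -
  have "4*int k+3-2*int q \<noteq> a" for q
  proof
    assume "4*int k+3-2*int q = a"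
    moreover have "odd (4*int k+3-2*int q)" by presburger
    ultimately show False using assms by simp
  qed
  thus ?thesis unfolding LYinv_def by simp
qed

lemma DIAinv_upd[simp]: "a < 0 \<Longrightarrow> j \<le> k \<Longrightarrow> DIAinv j (m(a := v)) = DIAinv j m"
  unfolding DIAinv_def by auto

lemma phase3_k0:
  assumes "regs k m" "LXinv 0 m" "LYinv k m" "k = 0"
  shows "\<exists>m'. reachB (44,m) (129,m') 5 \<and> LXinv 0 m' \<and> LYinv k m' \<and> DIAinv 0 m'"
proof -
  have R: "m 0 = 0" "m (-1) = 1" "m (-2) = 2*int k+1" "m (-3) = 4*int k+3" "m (-4) = 0"
    using assms by (simp_all add: regs_def)
  show ?thesis
    using R assms(2,3)
    apply -
    apply (rule exI, rule conjI)
     apply (rule reachB_stepI, simp, simp del: exec_instr.simps add: ex_simps)+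
     apply (rule reachB_refl)
    apply (simp add: DIAinv_def dx_def dy_def)
    done
qed

lemma phase3:
  assumes g: "goodE k E" and "regs k m" "LXinv 0 m" "LYinv k m" and k: "1 \<le> k"
  shows "\<exists>m'. reachB (44,m) (57,m') 13 \<and> regs k m' \<and> m' (-5) = 1 \<and> LXinv 0 m' \<and> LYinv k m' \<and> DIAinv 1 m'"
proof -
  have N: "nat (2 * int k + 1 - 1) = 2*k" "nat (2 * int k) = 2*k" "nat (2 * int k + 1) = 2*k+1" by simp_all
  have ne: "(4::int) \<noteq> 4 * int k + 2" "(2::int) \<noteq> 4 * int k + 2" "(2::int) \<noteq> 4 * int k + 4" "(4::int) \<noteq> 4 * int k + 4"
    "4 * int k + 2 \<noteq> 4" "4 + 4 * int k \<noteq> 4" "2 + 4 * int k \<noteq> 4" "4 * int k + 2 \<noteq> 4 * int k + 4"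
    using k by presburger+
  have D: "dx 1 \<longleftrightarrow> E 0 1" "dy 1 \<longleftrightarrow> E (2*k) (2*k+1)"
    using A_1[OF g k] B_1[OF g k] by (simp_all add: dx_def dy_def)
  show ?thesis
    using assms N ne D
    apply (simp add: regs_def)
    apply (cases "E 0 1"; cases "E (2*k) (2*k+1)"; (rule exI, rule conjI, ((rule reachB_stepI, simp, simp del: exec_instr.simps add: ex_simps)+, rule reachB_refl), simp add: DIAinv_def le_Suc_eq))
    done
qed

definition botY :: "nat \<Rightarrow> int" where "botY q = int q - int (lce_y E k q)"
definition topX :: "nat \<Rightarrow> int" where "topX q = int q + int (lce_x E k q)"

definition condA :: "nat \<Rightarrow> nat \<Rightarrow> bool" where
  "condA j u \<longleftrightarrow> u \<noteq> j \<and> dy (u+1) \<and> botY (u+1) = botY j"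

definition adjok :: bool where
  "adjok \<longleftrightarrow> (\<forall>u \<le> 2*k+1. set (outl u) = {v. E u v} \<and> set (inl u) = {v. E v u})"

lemma ex_mono: "\<exists>m'. reachB c (p,m') N \<and> P m' \<Longrightarrow> N \<le> N' \<Longrightarrow> \<exists>m'. reachB c (p,m') N' \<and> P m'"
  using reachB_mono by blast

definition postA :: "nat \<Rightarrow> nat \<Rightarrow> (int \<Rightarrow> int) \<Rightarrow> (int \<Rightarrow> int) \<Rightarrow> bool" where
  "postA j idx m m' \<longleftrightarrow> regs k m' \<and> m' (-5) = int j \<and> m' (-14) = int (Suc j) \<and>
     m' (-12) = int (length (inl (Suc j))) \<and> m' (-13) = int (Suc idx) \<and> m' (-15) = botY j \<and>
     m' (-11) = (if condA j (inl (Suc j) ! idx) then 1 else m (-11)) \<and>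
     LXinv 0 m' \<and> LYinv k m' \<and> DIAinv j m'"

lemma innerA_iter:
  assumes g: "goodE k E" and adj: adjok and j: "1 \<le> j" "j < k"
    and R: "regs k m" and M: "m (-5) = int j" "m (-14) = int (Suc j)" "m (-12) = int (length (inl (Suc j)))"
       "m (-13) = int idx" "m (-15) = botY j"
    and I: "LXinv 0 m" "LYinv k m" "DIAinv j m"
    and idx: "idx < length (inl (Suc j))"
  shows "\<exists>m'. reachB (67, m) (67, m') 19 \<and> postA j idx m m'"
proof -
  obtain u where U: "inl (Suc j) ! idx = u" by simp
  have "u \<in> set (inl (Suc j))" using idx U by auto
  hence "E u (Suc j)" using adj j unfolding adjok_def by auto
  hence uj: "u \<le> j" using goodE_inc[OF g] by fastforce
  have RB: "m (2 + (4 * int k - 2 * int u)) = (if dy (Suc u) then 1 else 0)" if "u < j"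
  proof -
    have X: "Suc u \<le> j" using that by simp
    have "m (4*int k+4-2*int (Suc u)) = (if dy (Suc u) then 1 else 0)"
      using I(3) X unfolding DIAinv_def by blast
    moreover have "4*int k+4-2*int (Suc u) = 2 + (4 * int k - 2 * int u)" by simp
    ultimately show ?thesis by simp
  qed
  have RL: "m (1 + (4 * int k - 2 * int u)) = int (lce_y E k (Suc u))"
  proof -
    have X: "Suc u \<le> k" using uj j by simp
    have "m (4*int k+3-2*int (Suc u)) = int (lce_y E k (Suc u))"
      using I(2) X unfolding LYinv_def by blast
    moreover have "4*int k+3-2*int (Suc u) = 1 + (4 * int k - 2 * int u)" by simp
    ultimately show ?thesis by simp
  qed
  show ?thesis
  proof (cases "u = j")
    case True
    have "\<not> condA j u" using True by (simp add: condA_def)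
    hence "\<exists>m'. reachB (67, m) (67, m') 6 \<and> postA j idx m m'"
      using R M I idx True j U
      apply (simp add: regs_def)
      apply (rule exI, rule conjI)
       apply (rule reachB_stepI, simp, simp del: exec_instr.simps add: ex_simps)+
       apply (rule reachB_refl)
      apply (simp add: postA_def regs_def)
      done
    thus ?thesis by (rule ex_mono) simp
  next
    case False
    show ?thesis
    proof (cases "dy (u+1)")
      case dF: False
      have "\<not> condA j u" using dF by (simp add: condA_def)
      hence "\<exists>m'. reachB (67, m) (67, m') 11 \<and> postA j idx m m'"
        using R M I idx False dF j uj U RB
        apply (simp add: regs_def)
        apply (rule exI, rule conjI)
         apply (rule reachB_stepI, simp, simp del: exec_instr.simps add: ex_simps)+
         apply (rule reachB_refl)
        apply (simp add: postA_def regs_def)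
        done
      thus ?thesis by (rule ex_mono) simp
    next
      case dT: True
      show ?thesis
      proof (cases "botY (Suc u) = botY j")
        case bT: True
        have "condA j u" using bT dT False by (simp add: condA_def)
        hence "\<exists>m'. reachB (67, m) (67, m') 19 \<and> postA j idx m m'"
          using R M I idx False dT bT j uj U RB RL
          apply (simp add: regs_def botY_def)
          apply (rule exI, rule conjI)
           apply (rule reachB_stepI, simp, simp del: exec_instr.simps add: ex_simps)+
           apply (rule reachB_refl)
          apply (simp add: postA_def regs_def botY_def)
          done
        thus ?thesis by (rule ex_mono) simp
      next
        case bF: False
        have "\<not> condA j u" using bF by (simp add: condA_def)
        hence "\<exists>m'. reachB (67, m) (67, m') 18 \<and> postA j idx m m'"
          using R M I idx False dT bF j uj U RB RL
          apply (simp add: regs_def botY_def)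
          apply (rule exI, rule conjI)
           apply (rule reachB_stepI, simp, simp del: exec_instr.simps add: ex_simps)+
           apply (rule reachB_refl)
          apply (simp add: postA_def regs_def botY_def)
          done
        thus ?thesis by (rule ex_mono) simp
      qed
    qed
  qed
qed

definition flA :: "nat \<Rightarrow> nat \<Rightarrow> int" where
  "flA j i = (if \<exists>n<i. condA j (inl (Suc j) ! n) then 1 else 0)"

lemma flA_Suc: "flA j (Suc i) = (if condA j (inl (Suc j) ! i) then 1 else flA j i)"
  unfolding flA_def by (auto simp: less_Suc_eq)

lemma innerA_loop:
  assumes g: "goodE k E" and adj: adjok and j: "1 \<le> j" "j < k"
  shows "regs k m \<Longrightarrow> m (-5) = int j \<Longrightarrow> m (-14) = int (Suc j) \<Longrightarrow> m (-12) = int (length (inl (Suc j))) \<Longrightarrow>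
       m (-13) = int idx \<Longrightarrow> m (-15) = botY j \<Longrightarrow> m (-11) = flA j idx \<Longrightarrow>
       LXinv 0 m \<Longrightarrow> LYinv k m \<Longrightarrow> DIAinv j m \<Longrightarrow> idx \<le> length (inl (Suc j)) \<Longrightarrow>
       \<exists>m'. reachB (67, m) (87, m') (19 * (length (inl (Suc j)) - idx) + 2) \<and> regs k m' \<and> m' (-5) = int j \<and>
          m' (-11) = flA j (length (inl (Suc j))) \<and> LXinv 0 m' \<and> LYinv k m' \<and> DIAinv j m'"
proof (induction "length (inl (Suc j)) - idx" arbitrary: idx m)
  case 0
  hence ii: "idx = length (inl (Suc j))" by simp
  show ?case
    using 0 ii j
    apply (simp add: regs_def)
    apply (rule exI, rule conjI)
     apply (rule reachB_stepI, simp, simp del: exec_instr.simps add: ex_simps)+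
     apply (rule reachB_refl)
    apply simp
    done
next
  case (Suc d)
  have idx: "idx < length (inl (Suc j))" using Suc by simp
  obtain m1 where R1: "reachB (67, m) (67, m1) 19" and P: "postA j idx m m1"
    using innerA_iter[OF g adj j Suc.prems(1-6) Suc.prems(8-10) idx] by blast
  have P': "regs k m1" "m1 (-5) = int j" "m1 (-14) = int (Suc j)" "m1 (-12) = int (length (inl (Suc j)))"
    "m1 (-13) = int (Suc idx)" "m1 (-15) = botY j" "m1 (-11) = flA j (Suc idx)"
    "LXinv 0 m1" "LYinv k m1" "DIAinv j m1"
    using P Suc.prems(7) unfolding postA_def by (simp_all add: flA_Suc)
  have dd: "d = length (inl (Suc j)) - Suc idx" using Suc by simp
  obtain m' where R2: "reachB (67, m1) (87, m') (19 * (length (inl (Suc j)) - Suc idx) + 2)"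
    and M': "regs k m'" "m' (-5) = int j" "m' (-11) = flA j (length (inl (Suc j)))" "LXinv 0 m'" "LYinv k m'" "DIAinv j m'"
    using Suc.hyps(1)[OF dd P'] idx by auto
  have "19 + (19 * (length (inl (Suc j)) - Suc idx) + 2) = 19 * (length (inl (Suc j)) - idx) + 2"
    using idx by (simp add: Suc_diff_Suc)
  hence "reachB (67, m) (87, m') (19 * (length (inl (Suc j)) - idx) + 2)"
    using reachB_trans[OF R1 R2] by simp
  thus ?case using M' by blast
qed

definition condB :: "nat \<Rightarrow> nat \<Rightarrow> bool" where
  "condB j v \<longleftrightarrow> v \<noteq> 2*k+1-j \<and> dx (2*k+2-v) \<and> topX (2*k+2-v) = topX j"

definition postB :: "int \<Rightarrow> nat \<Rightarrow> nat \<Rightarrow> (int \<Rightarrow> int) \<Rightarrow> (int \<Rightarrow> int) \<Rightarrow> bool" where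
  "postB a0 j idx m m' \<longleftrightarrow> m' a0 = m a0 \<and> regs k m' \<and> m' (-5) = int j \<and> m' (-14) = 2*int k - int j \<and>
     m' (-12) = int (length (outl (2*k-j))) \<and> m' (-13) = int (Suc idx) \<and> m' (-15) = topX j \<and>
     m' (-11) = (if condB j (outl (2*k-j) ! idx) then 1 else m (-11)) \<and>
     LXinv 0 m' \<and> LYinv k m' \<and> DIAinv j m'"

lemma innerB_iter:
  assumes g: "goodE k E" and adj: adjok and j: "1 \<le> j" "j < k"
    and R: "regs k m" and M: "m (-5) = int j" "m (-14) = 2*int k - int j" "m (-12) = int (length (outl (2*k-j)))"
       "m (-13) = int idx" "m (-15) = topX j"
    and I: "LXinv 0 m" "LYinv k m" "DIAinv j m"
    and idx: "idx < length (outl (2*k-j))" and a0: "0 < a0"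
  shows "\<exists>m'. reachB (102, m) (102, m') 20 \<and> postB a0 j idx m m'"
proof -
  obtain v where U: "outl (2*k-j) ! idx = v" by simp
  have "v \<in> set (outl (2*k-j))" using idx U by auto
  hence "E (2*k-j) v" using adj j unfolding adjok_def by auto
  hence v1: "2*k-j < v" "v \<le> 2*k+1" using goodE_inc[OF g] goodE_le[OF g] by auto
  define q where "q = 2*k+2-v"
  have q1: "1 \<le> q" "q \<le> j+1" "v = 2*k+2-q" using v1 j unfolding q_def by auto
  have V: "int v = 2*int k + 2 - int q" using q1 j by simp
  have N: "nat (2 * int k - int j) = 2*k - j" using j by simp
  have RA: "m (2 + 2 * int q) = (if dx q then 1 else 0)" if "q \<le> j"
  proof -
    have "m (2*int q+2) = (if dx q then 1 else 0)" using I(3) that unfolding DIAinv_def by blast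
    thus ?thesis by (simp add: add.commute)
  qed
  have RL: "m (2*int q+1) = int (lce_x E k q)"
  proof -
    have "q \<le> k" using q1 j by simp
    thus "m (2*int q+1) = int (lce_x E k q)" using I(1) unfolding LXinv_def by blast
  qed
  have qq: "2*k+2-v = q" unfolding q_def by simp
  show ?thesis
  proof (cases "q = j+1")
    case True
    have "\<not> condB j v" using True q1 by (simp add: condB_def)
    hence "\<exists>m'. reachB (102, m) (102, m') 7 \<and> postB a0 j idx m m'"
      using R M I idx True j U V N a0
      apply (simp add: regs_def)
      apply (rule exI, rule conjI)
       apply (rule reachB_stepI, simp, simp del: exec_instr.simps add: ex_simps)+
       apply (rule reachB_refl)
      apply (simp add: postB_def regs_def)
      done
    thus ?thesis by (rule ex_mono) simp
  next
    case False
    hence qj: "q \<le> j" using q1 by simp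
    show ?thesis
    proof (cases "dx q")
      case dF: False
      have "\<not> condB j v" using dF qq by (simp add: condB_def)
      hence "\<exists>m'. reachB (102, m) (102, m') 14 \<and> postB a0 j idx m m'"
        using R M I idx False dF j U V N a0 RA[OF qj] qj
        apply (simp add: regs_def)
        apply (rule exI, rule conjI)
         apply (rule reachB_stepI, simp, simp del: exec_instr.simps add: ex_simps)+
         apply (rule reachB_refl)
        apply (simp add: postB_def regs_def)
        done
      thus ?thesis by (rule ex_mono) simp
    next
      case dT: True
      show ?thesis
      proof (cases "topX q = topX j")
        case bT: True
        have "v \<noteq> 2*k+1-j" using q1 False j by linarith
        hence "condB j v" using bT dT qq by (simp add: condB_def)
        hence "\<exists>m'. reachB (102, m) (102, m') 20 \<and> postB a0 j idx m m'"
          using R M I idx False dT bT j U a0 V N RA[OF qj] RL qj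
          apply (simp add: regs_def topX_def)
          apply (rule exI, rule conjI)
           apply (rule reachB_stepI, simp, simp del: exec_instr.simps add: ex_simps)+
           apply (rule reachB_refl)
          apply (simp add: postB_def regs_def topX_def)
          done
        thus ?thesis by (rule ex_mono) simp
      next
        case bF: False
        have "\<not> condB j v" using bF qq by (simp add: condB_def)
        hence "\<exists>m'. reachB (102, m) (102, m') 19 \<and> postB a0 j idx m m'"
          using R M I idx False dT bF j U a0 V N RA[OF qj] RL qj
          apply (simp add: regs_def topX_def)
          apply (rule exI, rule conjI)
           apply (rule reachB_stepI, simp, simp del: exec_instr.simps add: ex_simps)+
           apply (rule reachB_refl)
          apply (simp add: postB_def regs_def topX_def)
          done
        thus ?thesis by (rule ex_mono) simp
      qed
    qed
  qed
qed

definition flB :: "nat \<Rightarrow> nat \<Rightarrow> int" where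
  "flB j i = (if \<exists>n<i. condB j (outl (2*k-j) ! n) then 1 else 0)"

lemma flB_Suc: "flB j (Suc i) = (if condB j (outl (2*k-j) ! i) then 1 else flB j i)"
  unfolding flB_def by (auto simp: less_Suc_eq)

lemma innerB_loop:
  assumes g: "goodE k E" and adj: adjok and j: "1 \<le> j" "j < k" and a0: "0 < a0"
  shows "regs k m \<Longrightarrow> m (-5) = int j \<Longrightarrow> m (-14) = 2*int k - int j \<Longrightarrow> m (-12) = int (length (outl (2*k-j))) \<Longrightarrow>
       m (-13) = int idx \<Longrightarrow> m (-15) = topX j \<Longrightarrow> m (-11) = flB j idx \<Longrightarrow>
       LXinv 0 m \<Longrightarrow> LYinv k m \<Longrightarrow> DIAinv j m \<Longrightarrow> idx \<le> length (outl (2*k-j)) \<Longrightarrow>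
       \<exists>m'. reachB (102, m) (123, m') (20 * (length (outl (2*k-j)) - idx) + 2) \<and> m' a0 = m a0 \<and> regs k m' \<and> m' (-5) = int j \<and>
          m' (-11) = flB j (length (outl (2*k-j))) \<and> LXinv 0 m' \<and> LYinv k m' \<and> DIAinv j m'"
proof (induction "length (outl (2*k-j)) - idx" arbitrary: idx m)
  case 0
  hence ii: "idx = length (outl (2*k-j))" by simp
  show ?case
    using 0 ii j a0
    apply (simp add: regs_def)
    apply (rule exI, rule conjI)
     apply (rule reachB_stepI, simp, simp del: exec_instr.simps add: ex_simps)+
     apply (rule reachB_refl)
    apply simp
    done
next
  case (Suc d)
  have idx: "idx < length (outl (2*k-j))" using Suc by simp
  obtain m1 where R1: "reachB (102, m) (102, m1) 20" and P: "postB a0 j idx m m1"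
    using innerB_iter[OF g adj j Suc.prems(1-6) Suc.prems(8-10) idx a0] by blast
  have A0: "m1 a0 = m a0" using P unfolding postB_def by simp
  have P': "regs k m1" "m1 (-5) = int j" "m1 (-14) = 2*int k - int j" "m1 (-12) = int (length (outl (2*k-j)))"
    "m1 (-13) = int (Suc idx)" "m1 (-15) = topX j" "m1 (-11) = flB j (Suc idx)"
    "LXinv 0 m1" "LYinv k m1" "DIAinv j m1"
    using P Suc.prems(7) unfolding postB_def by (simp_all add: flB_Suc)
  have dd: "d = length (outl (2*k-j)) - Suc idx" using Suc by simp
  obtain m' where R2: "reachB (102, m1) (123, m') (20 * (length (outl (2*k-j)) - Suc idx) + 2)"
    and M': "m' a0 = m1 a0" "regs k m'" "m' (-5) = int j" "m' (-11) = flB j (length (outl (2*k-j)))" "LXinv 0 m'" "LYinv k m'" "DIAinv j m'"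
    using Suc.hyps(1)[OF dd P'] idx by auto
  have "20 + (20 * (length (outl (2*k-j)) - Suc idx) + 2) = 20 * (length (outl (2*k-j)) - idx) + 2"
    using idx by (simp add: Suc_diff_Suc)
  hence "reachB (102, m) (123, m') (20 * (length (outl (2*k-j)) - idx) + 2)"
    using reachB_trans[OF R1 R2] by simp
  thus ?case using M' A0 by auto
qed

end



context RAM begin

lemma flA0[simp]: "flA j 0 = 0" by (simp add: flA_def)
lemma flB0[simp]: "flB j 0 = 0" by (simp add: flB_def)

lemma blockB1:
  assumes j: "1 \<le> j" "j < k" and R: "regs k m" and M: "m (-5) = int j"
    and I: "LXinv 0 m" "LYinv k m" "DIAinv j m"
  shows "\<exists>m1. reachB (57, m) (67, m1) 10 \<and> regs k m1 \<and> m1 (-5) = int j \<and> m1 (-14) = int (Suc j) \<and>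
     m1 (-12) = int (length (inl (Suc j))) \<and> m1 (-13) = int 0 \<and> m1 (-15) = botY j \<and> m1 (-11) = flA j 0 \<and>
     LXinv 0 m1 \<and> LYinv k m1 \<and> DIAinv j m1"
proof -
  have RL: "m (4*int k+3-2*int j) = int (lce_y E k j)" using I(2) j unfolding LYinv_def by simp
  show ?thesis
    using R M I j RL
    apply (simp add: regs_def)
    apply (rule exI, rule conjI)
     apply (rule reachB_stepI, simp, simp del: exec_instr.simps add: ex_simps)+
     apply (rule reachB_refl)
    apply (simp add: botY_def)
    done
qed

lemma DIAinv_updA: "j < k \<Longrightarrow> DIAinv j (m(4 + 2*int j := v)) = DIAinv j m"
  unfolding DIAinv_def by auto

lemma blockB2:
  assumes j: "1 \<le> j" "j < k" and R: "regs k m" and M: "m (-5) = int j"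
    and I: "LXinv 0 m" "LYinv k m" "DIAinv j m"
  shows "\<exists>m1. reachB (87, m) (102, m1) 15 \<and> m1 (2*int j+4) = m (-11) \<and> regs k m1 \<and> m1 (-5) = int j \<and>
     m1 (-14) = 2*int k - int j \<and>
     m1 (-12) = int (length (outl (2*k-j))) \<and> m1 (-13) = int 0 \<and> m1 (-15) = topX j \<and> m1 (-11) = flB j 0 \<and>
     LXinv 0 m1 \<and> LYinv k m1 \<and> DIAinv j m1"
proof -
  have RL: "m (2*int j+1) = int (lce_x E k j)" using I(1) j unfolding LXinv_def by simp
  have N: "nat (2 * int k - int j) = 2*k - j" using j by simp
  show ?thesis
    using R M I j RL N
    apply (simp add: regs_def)
    apply (rule exI, rule conjI)
     apply (rule reachB_stepI, simp, simp del: exec_instr.simps add: ex_simps)+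
     apply (rule reachB_refl)
    apply (simp add: topX_def DIAinv_updA)
    done
qed

lemma DIAinv_updB: "j < k \<Longrightarrow> DIAinv j (m(2 + (4*int k - 2*int j) := v)) = DIAinv j m"
  unfolding DIAinv_def by auto

lemma blockB3:
  assumes j: "1 \<le> j" "j < k" and R: "regs k m" and M: "m (-5) = int j"
    and I: "LXinv 0 m" "LYinv k m" "DIAinv j m"
  shows "\<exists>m1. reachB (123, m) (57, m1) 6 \<and> m1 (2*int j+4) = m (2*int j+4) \<and>
     m1 (4*int k+2-2*int j) = m (-11) \<and> regs k m1 \<and> m1 (-5) = int (Suc j) \<and>
     LXinv 0 m1 \<and> LYinv k m1 \<and> DIAinv j m1"
proof -
  show ?thesis
    using R M I j
    apply (simp add: regs_def)
    apply (rule exI, rule conjI)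
     apply (rule reachB_stepI, simp, simp del: exec_instr.simps add: ex_simps)+
     apply (rule reachB_refl)
    apply (simp add: DIAinv_updB)
    done
qed

lemma botY_eq: "q \<le> j \<Longrightarrow> botY q = botY j \<longleftrightarrow> chainY E k q j"
proof -
  assume qj: "q \<le> j"
  have "botY q = int (q - lce_y E k q)" "botY j = int (j - lce_y E k j)"
    unfolding botY_def using lce_y_le[of E k q] lce_y_le[of E k j] by (simp_all add: of_nat_diff)
  thus ?thesis using chainY_bot[OF qj, of E k] by simp
qed

lemma topX_eq: "q \<le> j \<Longrightarrow> j \<le> k \<Longrightarrow> topX q = topX j \<longleftrightarrow> chainX E q j"
proof -
  assume qj: "q \<le> j" "j \<le> k"
  have "topX q = int (q + lce_x E k q)" "topX j = int (j + lce_x E k j)"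
    unfolding topX_def by simp_all
  thus ?thesis using chainX_top[OF qj, of E] by arith
qed

lemma ex_nth_set: "(\<exists>n<length l. P (l!n)) = (\<exists>x\<in>set l. P x)"
  by (metis in_set_conv_nth)

lemma flA_correct:
  assumes g: "goodE k E" and adj: adjok and j: "1 \<le> j" "j < k"
  shows "flA j (length (inl (Suc j))) = (if dx (Suc j) then 1 else 0)"
proof -
  have S: "set (inl (Suc j)) = {u. E u (Suc j)}" using adj j unfolding adjok_def by auto
  have ex: "(\<exists>n<length (inl (Suc j)). condA j (inl (Suc j) ! n)) \<longleftrightarrow> (\<exists>u. E u (Suc j) \<and> condA j u)"
    unfolding ex_nth_set S by simp
  have key: "condA j u \<longleftrightarrow> u < j \<and> chainY E k (u+1) j \<and> Mtab E k u (u+1)" if e: "E u (Suc j)" for u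
  proof -
    have "u < Suc j" using goodE_inc[OF g e] .
    show ?thesis
    proof (cases "u = j")
      case True thus ?thesis by (simp add: condA_def)
    next
      case False
      hence uj: "u < j" using \<open>u < Suc j\<close> by simp
      have "botY (u+1) = botY j \<longleftrightarrow> chainY E k (u+1) j" using botY_eq[of "u+1" j] uj by simp
      thus ?thesis using False uj by (auto simp: condA_def dy_def)
    qed
  qed
  have "dx (Suc j) \<longleftrightarrow> Mtab E k (j+1) j" by (simp add: dx_def)
  also have "\<dots> \<longleftrightarrow> (\<exists>u<j. chainY E k (u+1) j \<and> Mtab E k u (u+1) \<and> E u (j+1))"
    using A_rec[OF g j(1)] j by simp
  also have "\<dots> \<longleftrightarrow> (\<exists>u. E u (Suc j) \<and> condA j u)" using key by auto
  finally show ?thesis unfolding flA_def using ex by simp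
qed

lemma flB_correct:
  assumes g: "goodE k E" and adj: adjok and j: "1 \<le> j" "j < k"
  shows "flB j (length (outl (2*k-j))) = (if dy (Suc j) then 1 else 0)"
proof -
  have S: "set (outl (2*k-j)) = {v. E (2*k-j) v}" using adj j unfolding adjok_def by auto
  have ex: "(\<exists>n<length (outl (2*k-j)). condB j (outl (2*k-j) ! n)) \<longleftrightarrow> (\<exists>v. E (2*k-j) v \<and> condB j v)"
    unfolding ex_nth_set S by simp
  have "dy (Suc j) \<longleftrightarrow> Mtab E k j (j+1)" by (simp add: dy_def)
  also have "\<dots> \<longleftrightarrow> (\<exists>u<j. chainX E (u+1) j \<and> Mtab E k (u+1) u \<and> E (2*k+1-(j+1)) (2*k+1-u))"
    using B_rec[OF g j(1)] j by simp
  also have "\<dots> \<longleftrightarrow> (\<exists>v. E (2*k-j) v \<and> condB j v)"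
  proof
    assume "\<exists>u<j. chainX E (u+1) j \<and> Mtab E k (u+1) u \<and> E (2*k+1-(j+1)) (2*k+1-u)"
    then obtain u where u: "u < j" "chainX E (u+1) j" "Mtab E k (u+1) u" "E (2*k+1-(j+1)) (2*k+1-u)" by blast
    have e: "E (2*k-j) (2*k+1-u)" using u(4) by simp
    have a: "2*k+2-(2*k+1-u) = u+1" using u j by simp
    have b: "2*k+1-u \<noteq> 2*k+1-j" using u j by simp
    have "topX (u+1) = topX j" using topX_eq[of "u+1" j] u j by simp
    hence "condB j (2*k+1-u)" unfolding condB_def a using b u by (simp add: dx_def)
    thus "\<exists>v. E (2*k-j) v \<and> condB j v" using e by blast
  next
    assume "\<exists>v. E (2*k-j) v \<and> condB j v"
    then obtain v where e: "E (2*k-j) v" and c: "condB j v" by blast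
    have v1: "2*k-j < v" "v \<le> 2*k+1" using goodE_inc[OF g e] goodE_le[OF g e] by auto
    define u where "u = 2*k+1-v"
    have uj: "u < j" using v1 c j unfolding u_def condB_def by auto
    have a: "2*k+2-v = u+1" using v1 unfolding u_def by simp
    have vv: "2*k+1-u = v" using v1 unfolding u_def by simp
    have "chainX E (u+1) j" using topX_eq[of "u+1" j] uj j c a unfolding condB_def by simp
    moreover have "Mtab E k (u+1) u"
    proof -
      have "dx (2*k+2-v)" using c unfolding condB_def by simp
      hence "dx (u+1)" unfolding a .
      thus ?thesis unfolding dx_def by simp
    qed
    moreover have "E (2*k+1-(j+1)) (2*k+1-u)" using e vv by simp
    ultimately show "\<exists>u<j. chainX E (u+1) j \<and> Mtab E k (u+1) u \<and> E (2*k+1-(j+1)) (2*k+1-u)"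
      using uj by blast
  qed
  finally show ?thesis unfolding flB_def using ex by simp
qed

lemma DIAinv_Suc:
  assumes "DIAinv j m" "m (2*int j+4) = (if dx (Suc j) then 1 else 0)"
     "m (4*int k+2-2*int j) = (if dy (Suc j) then 1 else 0)"
  shows "DIAinv (Suc j) m"
  unfolding DIAinv_def
proof (intro allI impI)
  fix q assume "q \<le> Suc j"
  hence "q \<le> j \<or> q = Suc j" by auto
  thus "m (2*int q+2) = (if dx q then 1 else 0) \<and> m (4*int k+4-2*int q) = (if dy q then 1 else 0)"
  proof
    assume "q \<le> j" thus ?thesis using assms(1) unfolding DIAinv_def by blast
  next
    assume q: "q = Suc j"
    have e: "2*int (Suc j)+2 = 2*int j+4" "4*int k+4-2*int (Suc j) = 4*int k+2-2*int j" by simp_all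
    show ?thesis unfolding q by (simp only: e assms(2,3))
  qed
qed

lemma outer_iter:
  assumes g: "goodE k E" and adj: adjok and j: "1 \<le> j" "j < k" and R: "regs k m" and M: "m (-5) = int j"
    and I: "LXinv 0 m" "LYinv k m" "DIAinv j m"
  shows "\<exists>m'. reachB (57, m) (57, m') (35 + 20 * (length (inl (Suc j)) + length (outl (2*k-j)))) \<and>
     regs k m' \<and> m' (-5) = int (Suc j) \<and> LXinv 0 m' \<and> LYinv k m' \<and> DIAinv (Suc j) m'"
proof -
  obtain m1 where R1: "reachB (57, m) (67, m1) 10" and P1: "regs k m1" "m1 (-5) = int j" "m1 (-14) = int (Suc j)"
     "m1 (-12) = int (length (inl (Suc j)))" "m1 (-13) = int 0" "m1 (-15) = botY j" "m1 (-11) = flA j 0"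
     "LXinv 0 m1" "LYinv k m1" "DIAinv j m1"
    using blockB1[OF j R M I] by blast
  obtain m2 where R2: "reachB (67, m1) (87, m2) (19 * (length (inl (Suc j)) - 0) + 2)" and
    P2: "regs k m2" "m2 (-5) = int j" "m2 (-11) = flA j (length (inl (Suc j)))" "LXinv 0 m2" "LYinv k m2" "DIAinv j m2"
    using innerA_loop[OF g adj j P1] by blast
  obtain m3 where R3: "reachB (87, m2) (102, m3) 15" and P3: "m3 (2*int j+4) = m2 (-11)" "regs k m3" "m3 (-5) = int j"
     "m3 (-14) = 2*int k - int j" "m3 (-12) = int (length (outl (2*k-j)))" "m3 (-13) = int 0" "m3 (-15) = topX j"
     "m3 (-11) = flB j 0" "LXinv 0 m3" "LYinv k m3" "DIAinv j m3"
    using blockB2[OF j P2(1,2) P2(4-6)] by blast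
  have a0: "0 < 2*int j+4" by simp
  obtain m4 where R4: "reachB (102, m3) (123, m4) (20 * (length (outl (2*k-j)) - 0) + 2)" and
    P4: "m4 (2*int j+4) = m3 (2*int j+4)" "regs k m4" "m4 (-5) = int j" "m4 (-11) = flB j (length (outl (2*k-j)))"
      "LXinv 0 m4" "LYinv k m4" "DIAinv j m4"
    using innerB_loop[OF g adj j a0 P3(2-11)] by blast
  obtain m5 where R5: "reachB (123, m4) (57, m5) 6" and P5: "m5 (2*int j+4) = m4 (2*int j+4)"
     "m5 (4*int k+2-2*int j) = m4 (-11)" "regs k m5" "m5 (-5) = int (Suc j)" "LXinv 0 m5" "LYinv k m5" "DIAinv j m5"
    using blockB3[OF j P4(2,3) P4(5-7)] by blast
  have D: "DIAinv (Suc j) m5"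
    using DIAinv_Suc[OF P5(7)] P5(1,2) P4(1,4) P3(1) P2(3) flA_correct[OF g adj j] flB_correct[OF g adj j] by simp
  have "reachB (57, m) (57, m5) (10 + (19 * (length (inl (Suc j)) - 0) + 2) + 15 + (20 * (length (outl (2*k-j)) - 0) + 2) + 6)"
    using reachB_trans[OF reachB_trans[OF reachB_trans[OF reachB_trans[OF R1 R2] R3] R4] R5] .
  hence "reachB (57, m) (57, m5) (35 + 20 * (length (inl (Suc j)) + length (outl (2*k-j))))"
    by (rule reachB_mono) simp
  thus ?thesis using P5(3-6) D by blast
qed

definition SA :: "nat \<Rightarrow> nat" where "SA j = (\<Sum>q\<in>{Suc j..k}. length (inl q))"
definition SB :: "nat \<Rightarrow> nat" where "SB j = (\<Sum>q\<in>{Suc k..2*k-j}. length (outl q))"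

lemma SA_step: "j < k \<Longrightarrow> SA j = length (inl (Suc j)) + SA (Suc j)"
  unfolding SA_def by (simp add: sum.atLeast_Suc_atMost)

lemma SB_step:
  assumes "j < k" shows "SB j = length (outl (2*k-j)) + SB (Suc j)"
proof -
  have "{Suc k..2*k-j} = insert (2*k-j) {Suc k..2*k-Suc j}" using assms by auto
  moreover have "2*k-j \<notin> {Suc k..2*k-Suc j}" using assms by auto
  ultimately show ?thesis unfolding SB_def by simp
qed

lemma outer_loop:
  assumes g: "goodE k E" and adj: adjok
  shows "1 \<le> j \<Longrightarrow> j \<le> k \<Longrightarrow> regs k m \<Longrightarrow> m (-5) = int j \<Longrightarrow> LXinv 0 m \<Longrightarrow> LYinv k m \<Longrightarrow> DIAinv j m \<Longrightarrow>
    \<exists>m'. reachB (57, m) (129, m') (35 * (k - j) + 2 + 20 * (SA j + SB j)) \<and>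
         LXinv 0 m' \<and> LYinv k m' \<and> DIAinv k m'"
proof (induction "k - j" arbitrary: j m)
  case 0
  hence jk: "j = k" by simp
  show ?case
    using 0 jk
    apply (simp add: regs_def)
    apply (rule exI, rule conjI)
     apply (rule reachB_stepI, simp, simp del: exec_instr.simps add: ex_simps)+
     apply (rule reachB_refl)
    apply simp
    done
next
  case (Suc d)
  have jk: "j < k" using Suc by simp
  obtain m1 where R1: "reachB (57, m) (57, m1) (35 + 20 * (length (inl (Suc j)) + length (outl (2*k-j))))"
    and P: "regs k m1" "m1 (-5) = int (Suc j)" "LXinv 0 m1" "LYinv k m1" "DIAinv (Suc j) m1"
    using outer_iter[OF g adj Suc.prems(1) jk Suc.prems(3-7)] by blast
  have dd: "d = k - Suc j" using Suc by simp
  obtain m' where R2: "reachB (57, m1) (129, m') (35 * (k - Suc j) + 2 + 20 * (SA (Suc j) + SB (Suc j)))"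
    and P': "LXinv 0 m'" "LYinv k m'" "DIAinv k m'"
    using Suc.hyps(1)[OF dd _ _ P] jk by auto
  have eq: "35 + 20 * (length (inl (Suc j)) + length (outl (2*k-j))) + (35 * (k - Suc j) + 2 + 20 * (SA (Suc j) + SB (Suc j)))
        = 35 * (k - j) + 2 + 20 * (SA j + SB j)"
    using SA_step[OF jk] SB_step[OF jk] jk by (simp add: Suc_diff_Suc algebra_simps)
  have "reachB (57, m) (129, m') (35 * (k - j) + 2 + 20 * (SA j + SB j))"
    using reachB_trans[OF R1 R2] unfolding eq .
  thus ?case using P' by blast
qed

end



lemma goodE_nc:
  assumes s: "sorted_listing W w sw k"
  shows "goodE k (nc_edge R W w sw k)"
proof -
  have A: "u < v \<and> v \<le> 2*k+1" if e: "nc_edge R W w sw k u v" for u v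
  proof -
    from e have uv: "u \<le> 2*k+1" "v \<le> 2*k+1" "pos_cord W w sw k u < pos_cord W w sw k v"
      unfolding nc_edge_def by auto
    have "u < v"
    proof (rule ccontr)
      assume "\<not> u < v"
      hence "v \<le> u" by simp
      hence "pos_cord W w sw k v \<le> pos_cord W w sw k u" using s uv unfolding sorted_listing_def by blast
      thus False using uv by simp
    qed
    thus ?thesis using uv by simp
  qed
  have B: "\<not> nc_edge R W w sw k u (2*k+1-u)" if u: "1 \<le> u \<and> u \<le> k" for u
  proof -
    have "ion_of k u = u" using u unfolding ion_of_def by simp
    moreover have "ion_of k (2*k+1-u) = u" using u unfolding ion_of_def by auto
    ultimately show ?thesis using u unfolding nc_edge_def by auto
  qed
  show ?thesis unfolding goodE_def using A B by blast
qed

lemma sum_in_le: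
  assumes g: "goodE k E" and adj: "adj_lists k E outl inl"
  shows "(\<Sum>q\<in>{..2*k+1}. length (inl q)) \<le> num_edges k E"
proof -
  define S where "S = {(u, v). u \<le> 2*k+1 \<and> v \<le> 2*k+1 \<and> E u v}"
  define B where "B = (\<lambda>q. (\<lambda>v. (v, q)) ` {v. E v q})"
  have finS: "finite S" unfolding S_def
    by (rule finite_subset[of _ "{..2*k+1} \<times> {..2*k+1}"]) auto
  have fin: "finite {v. E v q}" for q
  proof (rule finite_subset[of _ "{..2*k+1}"])
    show "{v. E v q} \<subseteq> {..2*k+1}"
    proof
      fix x assume "x \<in> {v. E v q}"
      hence e: "E x q" by simp
      show "x \<in> {..2*k+1}" using goodE_inc[OF g e] goodE_le[OF g e] by simp
    qed
  qed simp
  have len: "length (inl q) = card {v. E v q}" if "q \<le> 2*k+1" for q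
    using adj that unfolding adj_lists_def by (metis distinct_card)
  have cB: "card (B q) = card {v. E v q}" for q
    unfolding B_def by (rule card_image) (auto simp: inj_on_def)
  have "(\<Sum>q\<in>{..2*k+1}. length (inl q)) = (\<Sum>q\<in>{..2*k+1}. card (B q))"
    using len cB by simp
  also have "\<dots> = card (\<Union>(B ` {..2*k+1}))"
    by (rule card_UN_disjoint[symmetric]) (auto simp: B_def fin)
  also have "\<dots> \<le> card S"
  proof (rule card_mono[OF finS])
    show "\<Union>(B ` {..2*k+1}) \<subseteq> S" unfolding B_def S_def
      by (auto dest: goodE_inc[OF g] goodE_le[OF g])
  qed
  finally show ?thesis unfolding num_edges_def S_def .
qed

lemma sum_out_le:
  assumes g: "goodE k E" and adj: "adj_lists k E outl inl"
  shows "(\<Sum>q\<in>{..2*k+1}. length (outl q)) \<le> num_edges k E"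
proof -
  define S where "S = {(u, v). u \<le> 2*k+1 \<and> v \<le> 2*k+1 \<and> E u v}"
  define B where "B = (\<lambda>q. (\<lambda>v. (q, v)) ` {v. E q v})"
  have finS: "finite S" unfolding S_def
    by (rule finite_subset[of _ "{..2*k+1} \<times> {..2*k+1}"]) auto
  have fin: "finite {v. E q v}" for q
    by (rule finite_subset[of _ "{..2*k+1}"]) (auto dest: goodE_le[OF g])
  have len: "length (outl q) = card {v. E q v}" if "q \<le> 2*k+1" for q
    using adj that unfolding adj_lists_def by (metis distinct_card)
  have cB: "card (B q) = card {v. E q v}" for q
    unfolding B_def by (rule card_image) (auto simp: inj_on_def)
  have "(\<Sum>q\<in>{..2*k+1}. length (outl q)) = (\<Sum>q\<in>{..2*k+1}. card (B q))"
    using len cB by simp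
  also have "\<dots> = card (\<Union>(B ` {..2*k+1}))"
    by (rule card_UN_disjoint[symmetric]) (auto simp: B_def fin)
  also have "\<dots> \<le> card S"
  proof (rule card_mono[OF finS])
    show "\<Union>(B ` {..2*k+1}) \<subseteq> S" unfolding B_def S_def
      by (auto dest: goodE_inc[OF g] goodE_le[OF g])
  qed
  finally show ?thesis unfolding num_edges_def S_def .
qed

context RAM begin

lemma full_run:
  assumes g: "goodE k E" and adj: adjok
  shows "\<exists>mf. reachB (0, (\<lambda>_. 0)(0 := int k)) (129, mf) (29 + 63*k + 20*(SA 1 + SB 1)) \<and>
     LXinv 0 mf \<and> LYinv k mf \<and> DIAinv k mf"
proof -
  obtain m0 where R0: "reachB (0, (\<lambda>_. 0)(0 := int k)) (8, m0) 7" and P0: "regs k m0"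
    using phase0 by blast
  obtain m1 where R1: "reachB (8, m0) (10, m1) 2" and P1: "regs k m1" "m1 (-5) = int k" "LXinv k m1"
    using phase1_init[OF P0] by blast
  obtain m2 where R2: "reachB (10, m1) (25, m2) (13*k+1)" and P2: "regs k m2" "LXinv 0 m2"
    using phase1_loop[OF P1(1,2) _ P1(3)] by blast
  obtain m3 where R3: "reachB (25, m2) (27, m3) 2" and P3: "regs k m3" "m3 (-5) = 0" "LYinv 0 m3" "LXinv 0 m3"
    using phase2_init[OF P2] by blast
  obtain m4 where R4: "reachB (27, m3) (44, m4) (15*(k-0)+2)" and P4: "regs k m4" "LYinv k m4" "LXinv 0 m4"
    using phase2_loop[of m3 0] P3 by auto
  have R04: "reachB (0, (\<lambda>_. 0)(0 := int k)) (44, m4) (7 + 2 + (13*k+1) + 2 + (15*(k-0)+2))"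
    using reachB_trans[OF reachB_trans[OF reachB_trans[OF reachB_trans[OF R0 R1] R2] R3] R4] .
  show ?thesis
  proof (cases "k = 0")
    case True
    obtain mf where R5: "reachB (44, m4) (129, mf) 5" and P5: "LXinv 0 mf" "LYinv k mf" "DIAinv 0 mf"
      using phase3_k0[OF P4(1,3,2) True] by blast
    have "reachB (0, (\<lambda>_. 0)(0 := int k)) (129, mf) (29 + 63*k + 20*(SA 1 + SB 1))"
      using reachB_trans[OF R04 R5] by (rule reachB_mono) (simp add: True)
    thus ?thesis using P5 True by auto
  next
    case False
    hence k1: "1 \<le> k" by simp
    obtain m5 where R5: "reachB (44, m4) (57, m5) 13" and P5: "regs k m5" "m5 (-5) = 1" "LXinv 0 m5" "LYinv k m5" "DIAinv 1 m5"
      using phase3[OF g P4(1,3,2) k1] by blast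
    obtain mf where R6: "reachB (57, m5) (129, mf) (35 * (k - 1) + 2 + 20 * (SA 1 + SB 1))"
      and P6: "LXinv 0 mf" "LYinv k mf" "DIAinv k mf"
      using outer_loop[OF g adj _ k1 P5(1)] P5(2-5) by auto
    have "reachB (0, (\<lambda>_. 0)(0 := int k)) (129, mf) (29 + 63*k + 20*(SA 1 + SB 1))"
      using reachB_trans[OF reachB_trans[OF R04 R5] R6] by (rule reachB_mono) (use k1 in simp)
    thus ?thesis using P6 by auto
  qed
qed

lemma st_halt: "st (129, m) = (129, m)"
  by (simp add: st_eval prog_nth)

lemma funpow_fix: "f x = x \<Longrightarrow> (f ^^ n) x = x"
  by (induction n) auto

lemma main_RAM:
  assumes g: "goodE k E" and adj: "adj_lists k E outl inl"
  shows "halted prog (run prog k E outl inl (100 * ((2*k+2) + num_edges k E))) \<and>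
    (\<forall>p \<le> 2*k+1. snd (run prog k E outl inl (100 * ((2*k+2) + num_edges k E))) (2 * int p + 1) = int (lce_pos E k p) \<and>
       snd (run prog k E outl inl (100 * ((2*k+2) + num_edges k E))) (2 * int p + 2) = (if dia_pos E k p then 1 else 0))"
proof -
  have adjok: adjok using adj unfolding adj_lists_def adjok_def by blast
  obtain mf where R: "reachB (0, (\<lambda>_. 0)(0 := int k)) (129, mf) (29 + 63*k + 20*(SA 1 + SB 1))"
    and P: "LXinv 0 mf" "LYinv k mf" "DIAinv k mf"
    using full_run[OF g adjok] by blast
  have SA1: "SA 1 \<le> num_edges k E"
  proof -
    have "SA 1 \<le> (\<Sum>q\<in>{..2*k+1}. length (inl q))" unfolding SA_def
      by (rule sum_mono2) auto
    thus ?thesis using sum_in_le[OF g adj] by simp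
  qed
  have SB1: "SB 1 \<le> num_edges k E"
  proof -
    have "SB 1 \<le> (\<Sum>q\<in>{..2*k+1}. length (outl q))" unfolding SB_def
      by (rule sum_mono2) auto
    thus ?thesis using sum_out_le[OF g adj] by simp
  qed
  define N where "N = 100 * ((2*k+2) + num_edges k E)"
  have TN: "29 + 63*k + 20*(SA 1 + SB 1) \<le> N" unfolding N_def using SA1 SB1 by simp
  obtain n where n: "n \<le> 29 + 63*k + 20*(SA 1 + SB 1)" "(st ^^ n) (0, (\<lambda>_. 0)(0 := int k)) = (129, mf)"
    using R unfolding reachB_def by blast
  obtain d where dN: "N = d + n" using n TN by (metis le_add_diff_inverse2 le_trans)
  have "run prog k E outl inl N = (st ^^ (d + n)) (0, (\<lambda>_. 0)(0 := int k))"
    unfolding run_def st_def dN by simp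
  also have "\<dots> = (st ^^ d) (129, mf)"
    using n by (simp add: funpow_add)
  also have "\<dots> = (129, mf)" by (rule funpow_fix) (rule st_halt)
  finally have RUN: "run prog k E outl inl N = (129, mf)" .
  have H: "halted prog (129, mf)" by (simp add: halted_def prog_nth)
  have O: "mf (2 * int p + 1) = int (lce_pos E k p) \<and> mf (2 * int p + 2) = (if dia_pos E k p then 1 else 0)"
    if p: "p \<le> 2*k+1" for p
  proof (cases "p \<le> k")
    case True
    have "mf (2*int p+1) = int (lce_x E k p)" using P(1) True unfolding LXinv_def by blast
    moreover have "mf (2*int p+2) = (if dx p then 1 else 0)" using P(3) True unfolding DIAinv_def by blast
    ultimately show ?thesis using True by (simp add: lce_pos_def dia_pos_def dx_def)
  next
    case False
    define j where "j = 2*k+1-p"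
    have jk: "j \<le> k" "p = 2*k+1-j" using False p unfolding j_def by auto
    have a1: "4*int k+3-2*int j = 2*int p+1" "4*int k+4-2*int j = 2*int p+2" using jk False p by simp_all
    have "mf (4*int k+3-2*int j) = int (lce_y E k j)" using P(2) jk unfolding LYinv_def by blast
    moreover have "mf (4*int k+4-2*int j) = (if dy j then 1 else 0)" using P(3) jk unfolding DIAinv_def by blast
    ultimately show ?thesis using False unfolding a1 by (simp add: lce_pos_def dia_pos_def dy_def j_def Let_def)
  qed
  show ?thesis using RUN H O unfolding N_def[symmetric] by simp
qed

end


theorem lemma4:
  "\<exists>(P :: instr list) (c :: nat).
     \<forall>(R :: real set) (W :: real) (w :: nat \<Rightarrow> real) (sw :: nat \<Rightarrow> bool) (k :: nat)
       (outl :: nat \<Rightarrow> nat list) (inl :: nat \<Rightarrow> nat list).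
       finite R \<and> (\<forall>r\<in>R. r > 0) \<and> sorted_listing W w sw k \<and>
       adj_lists k (nc_edge R W w sw k) outl inl \<longrightarrow>
       (let E = nc_edge R W w sw k;
            cf = run P k E outl inl (c * ((2*k + 2) + num_edges k E))
        in halted P cf \<and>
           (\<forall>p \<le> 2*k + 1.
              snd cf (2 * int p + 1) = int (lce_pos E k p) \<and>
              snd cf (2 * int p + 2) = (if dia_pos E k p then 1 else 0)))"
proof (intro exI[of _ prog] exI[of _ 100] allI impI)
  fix R :: "real set" and W :: real and w :: "nat \<Rightarrow> real" and sw :: "nat \<Rightarrow> bool" and k :: nat
    and outl inl :: "nat \<Rightarrow> nat list"
  assume A: "finite R \<and> (\<forall>r\<in>R. r > 0) \<and> sorted_listing W w sw k \<and>
       adj_lists k (nc_edge R W w sw k) outl inl"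
  have g: "goodE k (nc_edge R W w sw k)" using goodE_nc A by blast
  have adj: "adj_lists k (nc_edge R W w sw k) outl inl" using A by blast
  show "let E = nc_edge R W w sw k;
            cf = run prog k E outl inl (100 * ((2*k + 2) + num_edges k E))
        in halted prog cf \<and>
           (\<forall>p \<le> 2*k + 1.
              snd cf (2 * int p + 1) = int (lce_pos E k p) \<and>
              snd cf (2 * int p + 2) = (if dia_pos E k p then 1 else 0))"
    using RAM.main_RAM[OF g adj] by (simp add: Let_def)
qed

end
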